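(* Let $P\in\mathcal{P}$. If $\nu$ is pathwise differentiable at $P$ with inefficient influence function $\phi_{\mathrm{ext},P}\in L^2(P;\mathcal{H})$, then $\nu$ has efficient influence function $\phi_P=\Pi_{L^2(P;\mathcal{H})}[\phi_{\mathrm{ext},P}\mid\Phi]\in L^2(P;\mathcal{H})$, the orthogonal projection of $\phi_{\mathrm{ext},P}$ in $L^2(P;\mathcal{H})$ onto $\Phi$.
   Context: $(\mathcal{Z},\mathbf{B})$ is a Polish space, $\mathcal{P}$ a model of distributions dominated by a $\sigma$-finite measure $\lambda$, $\mathcal{H}$ a real separable Hilbert space, $\nu:\mathcal{P}\to\mathcal{H}$. $\dot{\mathcal{P}}_P\subseteq L_0^2(P)=\{h\in L^2(P):Ph=0\}$ is the tangent space (closed linear span in $L^2(P)$ of scores $s$ of submodels $\{P_\epsilon\}\subset\mathcal{P}$ with $\|p_\epsilon^{1/2}-p^{1/2}-\epsilon sp^{1/2}/2\|_{L^2(\lambda)}=o(\epsilon)$). $\nu$ is pathwise differentiable at $P$ if there is a continuous linear $\dot{\nu}_P:\dot{\mathcal{P}}_P\to\mathcal{H}$ with $\|\nu(P_\epsilon)-\nu(P)-\epsilon\dot{\nu}_P(s)\|_{\mathcal{H}}=o(\epsilon)$ along every such submodel; its adjoint $\dot{\nu}_P^*:\mathcal{H}\to\dot{\mathcal{P}}_P$ is the efficient influence operator, whose pointwise values are taken from versions forming a separable process: there are a countable dense $\mathcal{H}'\subset\mathcal{H}$ and a $P$-probability-one set $\mathcal{Z}'$ such that for all $h\in\mathcal{H}$,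 $z\in\mathcal{Z}'$ some $h_j\in\mathcal{H}'$ with $h_j\to h$ have $\dot{\nu}_P^*(h_j)(z)\to\dot{\nu}_P^*(h)(z)$. $\phi_P$ is the efficient influence function if $\dot{\nu}_P^*(h)(z)=\langle h,\phi_P(z)\rangle_{\mathcal{H}}$ for all $h\in\mathcal{H}$ and all $z$ in a $P$-probability-one set. An influence operator is the adjoint $\dot{\nu}_{\mathrm{ext},P}^*:\mathcal{H}\to L_0^2(P)$ of a bounded linear operator $\dot{\nu}_{\mathrm{ext},P}:L_0^2(P)\to\mathcal{H}$ whose restriction to $\dot{\mathcal{P}}_P$ equals $\dot{\nu}_P$; $\phi_{\mathrm{ext},P}:\mathcal{Z}\to\mathcal{H}$ is an (inefficient) influence function if $\dot{\nu}_{\mathrm{ext},P}^*(h)(z)=\langle h,\phi_{\mathrm{ext},P}(z)\rangle_{\mathcal{H}}$ for all $h\in\mathcal{H}$ and $P$-a.e. $z$. $L^2(P;\mathcal{H})$ is the Hilbert space of Bochner measurable $f$ with $\int\|f\|_{\mathcal{H}}^2dP<\infty$, and $\Phi$ is the $L^2(P;\mathcal{H})$-closure of the linear span of $\{z\mapsto s(z)h:h\in\mathcal{H},s\in\dot{\mathcal{P}}_P\}$. *)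

theory Defs
  imports "HOL-Probability.Probability"
begin

text \<open>The sample space is a Polish type 'z with its Borel sigma-algebra.
  lam is the dominating sigma-finite measure, M the model (a set of probability
  measures on the Borel sets, all absolutely continuous w.r.t. lam), and the
  parameter nu maps measures to a real separable Hilbert space 'h.\<close>

definition model_setting :: "'z::polish_space measure \<Rightarrow> 'z measure set \<Rightarrow> bool" where
  "model_setting lam M \<longleftrightarrow>
     sigma_finite_measure lam \<and> sets lam = sets borel \<and>
     (\<forall>Q\<in>M. prob_space Q \<and> sets Q = sets borel \<and> absolutely_continuous lam Q)"

definition dens :: "'z::polish_space measure \<Rightarrow> 'z measure \<Rightarrow> 'z \<Rightarrow> real" where
  "dens lam Q z = enn2real (RN_deriv lam Q z)"

text \<open>L^2(P) and L^2_0(P) (real-valued functions; elements are representatives).\<close>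
definition L2 :: "'z measure \<Rightarrow> ('z \<Rightarrow> real) set" where
  "L2 P = {f. f \<in> borel_measurable P \<and> integrable P (\<lambda>z. (f z)\<^sup>2)}"

definition L2_0 :: "'z measure \<Rightarrow> ('z \<Rightarrow> real) set" where
  "L2_0 P = {f. f \<in> L2 P \<and> (\<integral>z. f z \<partial>P) = 0}"

definition L2norm :: "'z measure \<Rightarrow> ('z \<Rightarrow> real) \<Rightarrow> real" where
  "L2norm P f = sqrt (\<integral>z. (f z)\<^sup>2 \<partial>P)"

text \<open>A submodel through P with score s: a path eps \<mapsto> Pe eps in M (for eps near 0),
  Pe 0 = P, which is differentiable in quadratic mean with score s:
  || sqrt(p_eps) - sqrt(p) - eps s sqrt(p)/2 ||_{L^2(lam)} = o(eps).\<close>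
definition submodel ::
  "'z::polish_space measure \<Rightarrow> 'z measure set \<Rightarrow> 'z measure \<Rightarrow> (real \<Rightarrow> 'z measure) \<Rightarrow> ('z \<Rightarrow> real) \<Rightarrow> bool" where
  "submodel lam M P Pe s \<longleftrightarrow>
     Pe 0 = P \<and> (\<forall>\<^sub>F e in at 0. Pe e \<in> M) \<and> s \<in> L2 P \<and>
     ((\<lambda>e. (\<integral>\<^sup>+ z. ennreal ((sqrt (dens lam (Pe e) z) - sqrt (dens lam P z)
                 - e * s z * sqrt (dens lam P z) / 2)\<^sup>2) \<partial>lam) / ennreal (e\<^sup>2))
        \<longlongrightarrow> 0) (at 0)"

definition scores :: "'z::polish_space measure \<Rightarrow> 'z measure set \<Rightarrow> 'z measure \<Rightarrow> ('z \<Rightarrow> real) set" where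
  "scores lam M P = {s. \<exists>Pe. submodel lam M P Pe s}"

definition tangent_space :: "'z::polish_space measure \<Rightarrow> 'z measure set \<Rightarrow> 'z measure \<Rightarrow> ('z \<Rightarrow> real) set" where
  "tangent_space lam M P =
     {f \<in> L2 P. \<forall>\<epsilon>>0. \<exists>(n::nat) c s. (\<forall>i<n. s i \<in> scores lam M P) \<and>
        L2norm P (\<lambda>z. f z - (\<Sum>i<n. c i * s i z)) < \<epsilon>}"

definition bounded_linear_on ::
  "'z measure \<Rightarrow> ('z \<Rightarrow> real) set \<Rightarrow> (('z \<Rightarrow> real) \<Rightarrow> 'h::real_normed_vector) \<Rightarrow> bool" where
  "bounded_linear_on P S D \<longleftrightarrow>
     (\<forall>f\<in>S. \<forall>g\<in>S. \<forall>a b. D (\<lambda>z. a * f z + b * g z) = a *\<^sub>R D f + b *\<^sub>R D g) \<and>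
     (\<exists>C. \<forall>f\<in>S. norm (D f) \<le> C * L2norm P f)"

definition pathwise_derivative ::
  "'z::polish_space measure \<Rightarrow> 'z measure set \<Rightarrow> ('z measure \<Rightarrow> 'h::real_normed_vector)
     \<Rightarrow> 'z measure \<Rightarrow> (('z \<Rightarrow> real) \<Rightarrow> 'h) \<Rightarrow> bool" where
  "pathwise_derivative lam M nu P D \<longleftrightarrow>
     bounded_linear_on P (tangent_space lam M P) D \<and>
     (\<forall>Pe s. submodel lam M P Pe s \<longrightarrow>
        ((\<lambda>e. norm (nu (Pe e) - nu P - e *\<^sub>R D s) / \<bar>e\<bar>) \<longlongrightarrow> 0) (at 0))"

definition pathwise_differentiable ::
  "'z::polish_space measure \<Rightarrow> 'z measure set \<Rightarrow> ('z measure \<Rightarrow> 'h::real_normed_vector) \<Rightarrow> 'z measure \<Rightarrow> bool" where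
  "pathwise_differentiable lam M nu P \<longleftrightarrow> (\<exists>D. pathwise_derivative lam M nu P D)"

definition is_adjoint ::
  "'z measure \<Rightarrow> ('z \<Rightarrow> real) set \<Rightarrow> (('z \<Rightarrow> real) \<Rightarrow> 'h::real_inner) \<Rightarrow> ('h \<Rightarrow> 'z \<Rightarrow> real) \<Rightarrow> bool" where
  "is_adjoint P S D A \<longleftrightarrow>
     (\<forall>h. A h \<in> S \<and> (\<forall>f\<in>S. inner (D f) h = (\<integral>z. f z * A h z \<partial>P)))"

text \<open>Efficient influence operator: the adjoint of the pathwise derivative, with
  versions forming a separable process.\<close>
definition efficient_influence_operator ::
  "'z::polish_space measure \<Rightarrow> 'z measure set \<Rightarrow> 'z measure \<Rightarrow> (('z \<Rightarrow> real) \<Rightarrow> 'h::real_inner)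
     \<Rightarrow> ('h \<Rightarrow> 'z \<Rightarrow> real) \<Rightarrow> bool" where
  "efficient_influence_operator lam M P D A \<longleftrightarrow>
     is_adjoint P (tangent_space lam M P) D A \<and>
     (\<exists>H'. countable H' \<and> closure H' = UNIV \<and>
        (AE z in P. \<forall>h. \<exists>hj. (\<forall>j. hj j \<in> H') \<and> hj \<longlonglongrightarrow> h \<and>
                              (\<lambda>j. A (hj j) z) \<longlonglongrightarrow> A h z))"

definition efficient_influence_function ::
  "'z::polish_space measure \<Rightarrow> 'z measure set \<Rightarrow> 'z measure \<Rightarrow> (('z \<Rightarrow> real) \<Rightarrow> 'h::real_inner)
     \<Rightarrow> ('z \<Rightarrow> 'h) \<Rightarrow> bool" where
  "efficient_influence_function lam M P D phi \<longleftrightarrow>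
     (\<exists>A. efficient_influence_operator lam M P D A \<and>
          (AE z in P. \<forall>h. A h z = inner h (phi z)))"

definition influence_function ::
  "'z::polish_space measure \<Rightarrow> 'z measure set \<Rightarrow> 'z measure \<Rightarrow> (('z \<Rightarrow> real) \<Rightarrow> 'h::real_inner)
     \<Rightarrow> ('z \<Rightarrow> 'h) \<Rightarrow> bool" where
  "influence_function lam M P D phi \<longleftrightarrow>
     (\<exists>Dext A. bounded_linear_on P (L2_0 P) Dext \<and>
        (\<forall>f\<in>tangent_space lam M P. Dext f = D f) \<and>
        is_adjoint P (L2_0 P) Dext A \<and>
        (\<forall>h. AE z in P. A h z = inner h (phi z)))"

text \<open>L^2(P;'h): Bochner (= Borel, 'h being separable) measurable, square-integrable norm.\<close>
definition L2H :: "'z measure \<Rightarrow> ('z \<Rightarrow> 'h::real_normed_vector) set" where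
  "L2H P = {f. f \<in> borel_measurable P \<and> integrable P (\<lambda>z. (norm (f z))\<^sup>2)}"

definition L2Hnorm :: "'z measure \<Rightarrow> ('z \<Rightarrow> 'h::real_normed_vector) \<Rightarrow> real" where
  "L2Hnorm P f = sqrt (\<integral>z. (norm (f z))\<^sup>2 \<partial>P)"

definition Phi :: "'z::polish_space measure \<Rightarrow> 'z measure set \<Rightarrow> 'z measure \<Rightarrow> ('z \<Rightarrow> 'h::real_normed_vector) set" where
  "Phi lam M P =
     {f \<in> L2H P. \<forall>\<epsilon>>0. \<exists>(n::nat) s h. (\<forall>i<n. s i \<in> tangent_space lam M P) \<and>
        L2Hnorm P (\<lambda>z. f z - (\<Sum>i<n. s i z *\<^sub>R h i)) < \<epsilon>}"

definition is_orth_proj :: "'z measure \<Rightarrow> ('z \<Rightarrow> 'h::real_inner) set \<Rightarrow> ('z \<Rightarrow> 'h) \<Rightarrow> ('z \<Rightarrow> 'h) \<Rightarrow> bool" where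
  "is_orth_proj P S f g \<longleftrightarrow>
     g \<in> S \<and> (\<forall>k\<in>S. (\<integral>z. inner (f z - g z) (k z) \<partial>P) = 0)"

end

theory Submission
  imports Defs
begin


definition Ip :: "'z measure \<Rightarrow> ('z \<Rightarrow> 'h::real_inner) \<Rightarrow> ('z \<Rightarrow> 'h) \<Rightarrow> real" where
  "Ip M f g = (\<integral>z. inner (f z) (g z) \<partial>M)"

lemma L2H_add:
  fixes f g :: "'z \<Rightarrow> 'h::{real_inner, second_countable_topology}"
  assumes "f \<in> L2H M" "g \<in> L2H M"
  shows "(\<lambda>z. f z + g z) \<in> L2H M"
proof -
  have [measurable]: "f \<in> borel_measurable M" "g \<in> borel_measurable M"
    and i: "integrable M (\<lambda>z. (norm (f z))\<^sup>2)" "integrable M (\<lambda>z. (norm (g z))\<^sup>2)"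
    using assms by (auto simp: L2H_def)
  have "integrable M (\<lambda>z. (norm (f z + g z))\<^sup>2)"
  proof (rule Bochner_Integration.integrable_bound[of _ "\<lambda>z. 2 * (norm (f z))\<^sup>2 + 2 * (norm (g z))\<^sup>2"])
    show "integrable M (\<lambda>z. 2 * (norm (f z))\<^sup>2 + 2 * (norm (g z))\<^sup>2)" using i by auto
    show "(\<lambda>z. (norm (f z + g z))\<^sup>2) \<in> borel_measurable M" by measurable
    show "AE z in M. norm ((norm (f z + g z))\<^sup>2) \<le> norm (2 * (norm (f z))\<^sup>2 + 2 * (norm (g z))\<^sup>2)"
    proof (rule AE_I2)
      fix z
      have "norm (f z + g z) \<le> norm (f z) + norm (g z)" by (rule norm_triangle_ineq)
      then have "(norm (f z + g z))\<^sup>2 \<le> (norm (f z) + norm (g z))\<^sup>2"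
        by (simp add: power_mono)
      also have "\<dots> \<le> 2 * (norm (f z))\<^sup>2 + 2 * (norm (g z))\<^sup>2"
        using power2_sum[of "norm (f z)" "norm (g z)"] power2_diff[of "norm (f z)" "norm (g z)"]
          zero_le_power2[of "norm (f z) - norm (g z)"] by linarith
      finally show "norm ((norm (f z + g z))\<^sup>2) \<le> norm (2 * (norm (f z))\<^sup>2 + 2 * (norm (g z))\<^sup>2)"
        by simp
    qed
  qed
  then show ?thesis by (auto simp: L2H_def)
qed

lemma L2H_scale:
  fixes f :: "'z \<Rightarrow> 'h::{real_inner, second_countable_topology}"
  assumes "f \<in> L2H M"
  shows "(\<lambda>z. c *\<^sub>R f z) \<in> L2H M"
  using assms by (auto simp: L2H_def power_mult_distrib)

lemma L2H_zero: "(\<lambda>z. 0) \<in> L2H M"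
  by (auto simp: L2H_def)

lemma L2H_uminus:
  fixes f :: "'z \<Rightarrow> 'h::{real_inner, second_countable_topology}"
  assumes "f \<in> L2H M"
  shows "(\<lambda>z. - f z) \<in> L2H M"
  using L2H_scale[OF assms, of "-1"] by simp

lemma L2H_diff:
  fixes f g :: "'z \<Rightarrow> 'h::{real_inner, second_countable_topology}"
  assumes "f \<in> L2H M" "g \<in> L2H M"
  shows "(\<lambda>z. f z - g z) \<in> L2H M"
  using L2H_add[OF assms(1) L2H_uminus[OF assms(2)]] by simp

lemma L2H_sum:
  fixes f :: "'i \<Rightarrow> 'z \<Rightarrow> 'h::{real_inner, second_countable_topology}"
  assumes "\<And>i. i \<in> I \<Longrightarrow> f i \<in> L2H M"
  shows "(\<lambda>z. \<Sum>i\<in>I. f i z) \<in> L2H M"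
  using assms
proof (induction I rule: infinite_finite_induct)
  case (insert x F)
  then show ?case using L2H_add[of "f x" M "\<lambda>z. \<Sum>i\<in>F. f i z"] by simp
qed (auto simp: L2H_zero)

lemma L2H_inner_integrable:
  fixes f g :: "'z \<Rightarrow> 'h::{real_inner, second_countable_topology}"
  assumes "f \<in> L2H M" "g \<in> L2H M"
  shows "integrable M (\<lambda>z. inner (f z) (g z))"
proof -
  have [measurable]: "f \<in> borel_measurable M" "g \<in> borel_measurable M"
    and i: "integrable M (\<lambda>z. (norm (f z))\<^sup>2)" "integrable M (\<lambda>z. (norm (g z))\<^sup>2)"
    using assms by (auto simp: L2H_def)
  show ?thesis
  proof (rule Bochner_Integration.integrable_bound[of _ "\<lambda>z. (norm (f z))\<^sup>2 + (norm (g z))\<^sup>2"])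
    show "integrable M (\<lambda>z. (norm (f z))\<^sup>2 + (norm (g z))\<^sup>2)" using i by auto
    show "(\<lambda>z. inner (f z) (g z)) \<in> borel_measurable M" by measurable
    show "AE z in M. norm (inner (f z) (g z)) \<le> norm ((norm (f z))\<^sup>2 + (norm (g z))\<^sup>2)"
    proof (rule AE_I2)
      fix z
      have "\<bar>inner (f z) (g z)\<bar> \<le> norm (f z) * norm (g z)" by (rule Cauchy_Schwarz_ineq2)
      also have "\<dots> \<le> (norm (f z))\<^sup>2 + (norm (g z))\<^sup>2"
        using power2_diff[of "norm (f z)" "norm (g z)"] zero_le_power2[of "norm (f z) - norm (g z)"]
          mult_nonneg_nonneg[OF norm_ge_zero norm_ge_zero, of "f z" "g z"] by linarith
      finally show "norm (inner (f z) (g z)) \<le> norm ((norm (f z))\<^sup>2 + (norm (g z))\<^sup>2)"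
        by simp
    qed
  qed
qed

lemma L2Hnorm_Ip: "L2Hnorm M f = sqrt (Ip M f f)"
  by (simp add: L2Hnorm_def Ip_def power2_norm_eq_inner)

lemma Ip_nonneg: "Ip M f f \<ge> 0"
  by (simp add: Ip_def)

lemma Ip_sym: "Ip M f g = Ip M g f"
  by (simp add: Ip_def inner_commute)

lemma Ip_add_left:
  fixes f g k :: "'z \<Rightarrow> 'h::{real_inner, second_countable_topology}"
  assumes "f \<in> L2H M" "g \<in> L2H M" "k \<in> L2H M"
  shows "Ip M (\<lambda>z. f z + g z) k = Ip M f k + Ip M g k"
  unfolding Ip_def inner_add_left
  by (rule Bochner_Integration.integral_add; rule L2H_inner_integrable; fact)

lemma Ip_scale_left:
  fixes f k :: "'z \<Rightarrow> 'h::{real_inner, second_countable_topology}"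
  shows "Ip M (\<lambda>z. c *\<^sub>R f z) k = c * Ip M f k"
  unfolding Ip_def inner_scaleR_left by simp

lemma Ip_diff_left:
  fixes f g k :: "'z \<Rightarrow> 'h::{real_inner, second_countable_topology}"
  assumes "f \<in> L2H M" "g \<in> L2H M" "k \<in> L2H M"
  shows "Ip M (\<lambda>z. f z - g z) k = Ip M f k - Ip M g k"
  unfolding Ip_def inner_diff_left
  by (rule Bochner_Integration.integral_diff; rule L2H_inner_integrable; fact)

lemma Ip_add_right:
  fixes f g k :: "'z \<Rightarrow> 'h::{real_inner, second_countable_topology}"
  assumes "f \<in> L2H M" "g \<in> L2H M" "k \<in> L2H M"
  shows "Ip M k (\<lambda>z. f z + g z) = Ip M k f + Ip M k g"
  using Ip_add_left[OF assms] by (simp add: Ip_sym)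

lemma Ip_diff_right:
  fixes f g k :: "'z \<Rightarrow> 'h::{real_inner, second_countable_topology}"
  assumes "f \<in> L2H M" "g \<in> L2H M" "k \<in> L2H M"
  shows "Ip M k (\<lambda>z. f z - g z) = Ip M k f - Ip M k g"
  using Ip_diff_left[OF assms] by (simp add: Ip_sym)

lemma Ip_scale_right:
  fixes f k :: "'z \<Rightarrow> 'h::{real_inner, second_countable_topology}"
  shows "Ip M k (\<lambda>z. c *\<^sub>R f z) = c * Ip M k f"
  using Ip_scale_left[of M c f k] by (simp add: Ip_sym)

lemma Ip_expand_diff:
  fixes f g :: "'z \<Rightarrow> 'h::{real_inner, second_countable_topology}"
  assumes "f \<in> L2H M" "g \<in> L2H M"
  shows "Ip M (\<lambda>z. f z - g z) (\<lambda>z. f z - g z) = Ip M f f - 2 * Ip M f g + Ip M g g"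
  using assms L2H_diff[OF assms]
  by (simp add: Ip_diff_left Ip_diff_right Ip_sym[of M g f])

lemma Ip_expand_add:
  fixes f g :: "'z \<Rightarrow> 'h::{real_inner, second_countable_topology}"
  assumes "f \<in> L2H M" "g \<in> L2H M"
  shows "Ip M (\<lambda>z. f z + g z) (\<lambda>z. f z + g z) = Ip M f f + 2 * Ip M f g + Ip M g g"
  using assms L2H_add[OF assms]
  by (simp add: Ip_add_left Ip_add_right Ip_sym[of M g f])

lemma Ip_CS:
  fixes f g :: "'z \<Rightarrow> 'h::{real_inner, second_countable_topology}"
  assumes "f \<in> L2H M" "g \<in> L2H M"
  shows "\<bar>Ip M f g\<bar> \<le> L2Hnorm M f * L2Hnorm M g"
proof -
  define a where "a = Ip M f f"
  define b where "b = Ip M f g"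
  define c where "c = Ip M g g"
  have quad: "0 \<le> a - 2 * t * b + t\<^sup>2 * c" for t
  proof -
    have "0 \<le> Ip M (\<lambda>z. f z - t *\<^sub>R g z) (\<lambda>z. f z - t *\<^sub>R g z)" by (rule Ip_nonneg)
    also have "\<dots> = a - 2 * t * b + t\<^sup>2 * c"
      using Ip_expand_diff[OF assms(1) L2H_scale[OF assms(2), of t]]
      by (simp add: a_def b_def c_def Ip_scale_left Ip_scale_right power2_eq_square)
    finally show ?thesis .
  qed
  have a0: "a \<ge> 0" and c0: "c \<ge> 0" by (auto simp: a_def c_def Ip_nonneg)
  have "b\<^sup>2 \<le> a * c"
  proof (cases "c = 0")
    case True
    have "b = 0"
    proof (rule ccontr)
      assume "b \<noteq> 0"
      have "0 \<le> a - 2 * ((a + 1) / (2 * b)) * b" using quad[of "(a+1)/(2*b)"] True by simp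
      also have "\<dots> = -1" using \<open>b \<noteq> 0\<close> by (simp add: field_simps)
      finally show False by simp
    qed
    then show ?thesis using True by simp
  next
    case False
    then have cp: "c > 0" using c0 by simp
    have "0 \<le> a - 2 * (b / c) * b + (b / c)\<^sup>2 * c" by (rule quad)
    also have "\<dots> = a - b\<^sup>2 / c" using cp by (simp add: field_simps power2_eq_square)
    finally have "b\<^sup>2 / c \<le> a" by simp
    then show ?thesis using cp by (simp add: field_simps)
  qed
  then have "sqrt (b\<^sup>2) \<le> sqrt (a * c)" by (rule real_sqrt_le_mono)
  then show ?thesis
    by (simp add: L2Hnorm_Ip a_def b_def c_def real_sqrt_mult)
qed

lemma L2Hnorm_nonneg: "L2Hnorm M f \<ge> 0"
  by (simp add: L2Hnorm_def)

lemma L2Hnorm_sq: "(L2Hnorm M f)\<^sup>2 = Ip M f f"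
  by (simp add: L2Hnorm_Ip Ip_nonneg)

lemma L2Hnorm_triangle:
  fixes f g :: "'z \<Rightarrow> 'h::{real_inner, second_countable_topology}"
  assumes "f \<in> L2H M" "g \<in> L2H M"
  shows "L2Hnorm M (\<lambda>z. f z + g z) \<le> L2Hnorm M f + L2Hnorm M g"
proof -
  have "(L2Hnorm M (\<lambda>z. f z + g z))\<^sup>2 = Ip M f f + 2 * Ip M f g + Ip M g g"
    by (simp add: L2Hnorm_sq Ip_expand_add[OF assms])
  also have "\<dots> \<le> (L2Hnorm M f)\<^sup>2 + 2 * (L2Hnorm M f * L2Hnorm M g) + (L2Hnorm M g)\<^sup>2"
    using Ip_CS[OF assms] by (simp add: L2Hnorm_sq)
  also have "\<dots> = (L2Hnorm M f + L2Hnorm M g)\<^sup>2" by (simp add: power2_sum)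
  finally show ?thesis
    by (rule power2_le_imp_le) (simp add: L2Hnorm_nonneg add_nonneg_nonneg)
qed

lemma L2Hnorm_scale:
  fixes f :: "'z \<Rightarrow> 'h::{real_inner, second_countable_topology}"
  shows "L2Hnorm M (\<lambda>z. c *\<^sub>R f z) = \<bar>c\<bar> * L2Hnorm M f"
  by (simp add: L2Hnorm_Ip Ip_scale_left Ip_scale_right real_sqrt_mult)

lemma L2Hnorm_minus_commute:
  fixes f g :: "'z \<Rightarrow> 'h::{real_inner, second_countable_topology}"
  shows "L2Hnorm M (\<lambda>z. f z - g z) = L2Hnorm M (\<lambda>z. g z - f z)"
  by (simp add: L2Hnorm_def norm_minus_commute)

lemma L2Hnorm_triangle_diff:
  fixes f g k :: "'z \<Rightarrow> 'h::{real_inner, second_countable_topology}"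
  assumes "f \<in> L2H M" "g \<in> L2H M" "k \<in> L2H M"
  shows "L2Hnorm M (\<lambda>z. f z - g z) \<le> L2Hnorm M (\<lambda>z. f z - k z) + L2Hnorm M (\<lambda>z. k z - g z)"
  using L2Hnorm_triangle[OF L2H_diff[OF assms(1,3)] L2H_diff[OF assms(3,2)]] by simp




definition SA :: "'z measure \<Rightarrow> ('z \<Rightarrow> 'h::real_normed_vector) set \<Rightarrow> ('z \<Rightarrow> 'h) set" where
  "SA M B = {f \<in> L2H M. \<forall>\<epsilon>>0. \<exists>(n::nat) a. (\<forall>i<n. a i \<in> B) \<and>
        L2Hnorm M (\<lambda>z. f z - (\<Sum>i<n. a i z)) < \<epsilon>}"

lemma sum_concat_lessThan:
  fixes a1 a2 :: "nat \<Rightarrow> 'a::comm_monoid_add"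
  shows "(\<Sum>i<n1+n2. (if i < n1 then a1 i else a2 (i - n1))) = (\<Sum>i<n1. a1 i) + (\<Sum>i<n2. a2 i)"
proof (induction n2)
  case 0
  have "(\<Sum>i<n1. (if i < n1 then a1 i else a2 (i - n1))) = (\<Sum>i<n1. a1 i)"
    by (rule sum.cong) auto
  then show ?case by simp
next
  case (Suc n2)
  then show ?case by (simp add: add.assoc)
qed

context
  fixes M :: "'z measure" and B :: "('z \<Rightarrow> 'h::{real_inner, second_countable_topology}) set"
  assumes BL2: "B \<subseteq> L2H M"
    and Bscale: "\<And>a c. a \<in> B \<Longrightarrow> (\<lambda>z. c *\<^sub>R a z) \<in> B"
begin

lemma sumB_L2H: "(\<forall>i<n. a i \<in> B) \<Longrightarrow> (\<lambda>z. \<Sum>i<n. a i z) \<in> L2H M"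
  by (rule L2H_sum) (use BL2 in auto)

lemma SA_L2H: "f \<in> SA M B \<Longrightarrow> f \<in> L2H M"
  by (simp add: SA_def)

lemma SA_approx:
  assumes "f \<in> SA M B" "\<epsilon> > 0"
  obtains n :: nat and a where "\<forall>i<n. a i \<in> B" "L2Hnorm M (\<lambda>z. f z - (\<Sum>i<n. a i z)) < \<epsilon>"
proof -
  have "\<forall>\<epsilon>>0. \<exists>(n::nat) a. (\<forall>i<n. a i \<in> B) \<and> L2Hnorm M (\<lambda>z. f z - (\<Sum>i<n. a i z)) < \<epsilon>"
    using assms(1) by (simp add: SA_def)
  then have "\<exists>(n::nat) a. (\<forall>i<n. a i \<in> B) \<and> L2Hnorm M (\<lambda>z. f z - (\<Sum>i<n. a i z)) < \<epsilon>"
    using assms(2) by simp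
  then show ?thesis using that by blast
qed

lemma SA_closed:
  assumes f: "f \<in> L2H M" and appr: "\<And>\<epsilon>. \<epsilon> > 0 \<Longrightarrow> \<exists>g\<in>SA M B. L2Hnorm M (\<lambda>z. f z - g z) < \<epsilon>"
  shows "f \<in> SA M B"
  unfolding SA_def
proof (intro CollectI conjI allI impI f)
  fix \<epsilon> :: real assume "\<epsilon> > 0"
  then obtain g where g: "g \<in> SA M B" "L2Hnorm M (\<lambda>z. f z - g z) < \<epsilon>/2"
    using appr[of "\<epsilon>/2"] by auto
  then obtain n :: nat and a where a: "\<forall>i<n. a i \<in> B" "L2Hnorm M (\<lambda>z. g z - (\<Sum>i<n. a i z)) < \<epsilon>/2"
    using \<open>\<epsilon> > 0\<close> SA_approx[of g "\<epsilon>/2"] by auto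
  have "L2Hnorm M (\<lambda>z. f z - (\<Sum>i<n. a i z))
      \<le> L2Hnorm M (\<lambda>z. f z - g z) + L2Hnorm M (\<lambda>z. g z - (\<Sum>i<n. a i z))"
    by (rule L2Hnorm_triangle_diff[OF f sumB_L2H[OF a(1)] SA_L2H[OF g(1)]])
  also have "\<dots> < \<epsilon>" using g a by simp
  finally show "\<exists>(n::nat) a. (\<forall>i<n. a i \<in> B) \<and> L2Hnorm M (\<lambda>z. f z - (\<Sum>i<n. a i z)) < \<epsilon>"
    using a by blast
qed

lemma SA_add:
  assumes f: "f \<in> SA M B" and g: "g \<in> SA M B"
  shows "(\<lambda>z. f z + g z) \<in> SA M B"
  unfolding SA_def
proof (intro CollectI conjI allI impI)
  show "(\<lambda>z. f z + g z) \<in> L2H M" using L2H_add SA_L2H f g by blast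
  fix \<epsilon> :: real assume "\<epsilon> > 0"
  obtain n1 :: nat and a1 where a1: "\<forall>i<n1. a1 i \<in> B" "L2Hnorm M (\<lambda>z. f z - (\<Sum>i<n1. a1 i z)) < \<epsilon>/2"
    using f \<open>\<epsilon> > 0\<close> SA_approx[of f "\<epsilon>/2"] by auto
  obtain n2 :: nat and a2 where a2: "\<forall>i<n2. a2 i \<in> B" "L2Hnorm M (\<lambda>z. g z - (\<Sum>i<n2. a2 i z)) < \<epsilon>/2"
    using g \<open>\<epsilon> > 0\<close> SA_approx[of g "\<epsilon>/2"] by auto
  define a where "a i z = (if i < n1 then a1 i z else a2 (i - n1) z)" for i z
  have aB: "\<forall>i<n1+n2. a i \<in> B"
  proof (intro allI impI)
    fix i assume "i < n1 + n2"
    show "a i \<in> B"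
    proof (cases "i < n1")
      case True
      then have "a i = a1 i" by (simp add: a_def fun_eq_iff)
      then show ?thesis using a1 True by simp
    next
      case False
      then have "a i = a2 (i - n1)" by (simp add: a_def fun_eq_iff)
      then show ?thesis using a2 False \<open>i < n1 + n2\<close> by simp
    qed
  qed
  have sa: "(\<Sum>i<n1+n2. a i z) = (\<Sum>i<n1. a1 i z) + (\<Sum>i<n2. a2 i z)" for z
    unfolding a_def by (rule sum_concat_lessThan)
  have "L2Hnorm M (\<lambda>z. f z + g z - (\<Sum>i<n1+n2. a i z))
      = L2Hnorm M (\<lambda>z. (f z - (\<Sum>i<n1. a1 i z)) + (g z - (\<Sum>i<n2. a2 i z)))"
    by (simp only: sa add_diff_add)
  also have "\<dots> \<le> L2Hnorm M (\<lambda>z. f z - (\<Sum>i<n1. a1 i z)) + L2Hnorm M (\<lambda>z. g z - (\<Sum>i<n2. a2 i z))"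
    by (rule L2Hnorm_triangle[OF L2H_diff[OF SA_L2H[OF f] sumB_L2H[OF a1(1)]]
          L2H_diff[OF SA_L2H[OF g] sumB_L2H[OF a2(1)]]])
  also have "\<dots> < \<epsilon>" using a1 a2 by simp
  finally show "\<exists>(n::nat) a. (\<forall>i<n. a i \<in> B) \<and> L2Hnorm M (\<lambda>z. f z + g z - (\<Sum>i<n. a i z)) < \<epsilon>"
    using aB by blast
qed

lemma SA_scale:
  assumes f: "f \<in> SA M B"
  shows "(\<lambda>z. c *\<^sub>R f z) \<in> SA M B"
proof (cases "c = 0")
  case True
  have "(\<lambda>z. 0) \<in> SA M B"
    unfolding SA_def by (auto intro!: exI[of _ 0] simp: L2H_zero L2Hnorm_def)
  then show ?thesis using True by simp
next
  case False
  show ?thesis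
    unfolding SA_def
  proof (intro CollectI conjI allI impI)
    show "(\<lambda>z. c *\<^sub>R f z) \<in> L2H M" using L2H_scale SA_L2H f by blast
    fix \<epsilon> :: real assume "\<epsilon> > 0"
    then have "\<epsilon> / \<bar>c\<bar> > 0" using False by simp
    then obtain n :: nat and a where a: "\<forall>i<n. a i \<in> B" "L2Hnorm M (\<lambda>z. f z - (\<Sum>i<n. a i z)) < \<epsilon> / \<bar>c\<bar>"
      using f SA_approx by blast
    have aB: "\<forall>i<n. (\<lambda>z. c *\<^sub>R a i z) \<in> B" using a Bscale by auto
    have "L2Hnorm M (\<lambda>z. c *\<^sub>R f z - (\<Sum>i<n. c *\<^sub>R a i z))
        = L2Hnorm M (\<lambda>z. c *\<^sub>R (f z - (\<Sum>i<n. a i z)))"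
      by (simp add: scaleR_diff_right scaleR_sum_right)
    also have "\<dots> = \<bar>c\<bar> * L2Hnorm M (\<lambda>z. f z - (\<Sum>i<n. a i z))"
      by (rule L2Hnorm_scale)
    also have "\<dots> < \<epsilon>" using a False by (simp add: field_simps)
    finally show "\<exists>(n::nat) a. (\<forall>i<n. a i \<in> B) \<and> L2Hnorm M (\<lambda>z. c *\<^sub>R f z - (\<Sum>i<n. a i z)) < \<epsilon>"
      using aB by (intro exI[of _ n] exI[of _ "\<lambda>i z. c *\<^sub>R a i z"]) auto
  qed
qed

lemma SA_zero: "(\<lambda>z. 0) \<in> SA M B"
  unfolding SA_def by (auto intro!: exI[of _ 0] simp: L2H_zero L2Hnorm_def)

lemma SA_base:
  assumes "b \<in> B" shows "b \<in> SA M B"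
  unfolding SA_def
proof (intro CollectI conjI allI impI)
  show "b \<in> L2H M" using assms BL2 by auto
  fix \<epsilon> :: real assume "\<epsilon> > 0"
  then show "\<exists>(n::nat) a. (\<forall>i<n. a i \<in> B) \<and> L2Hnorm M (\<lambda>z. b z - (\<Sum>i<n. a i z)) < \<epsilon>"
    using assms by (intro exI[of _ 1] exI[of _ "\<lambda>_. b"]) (auto simp: L2Hnorm_def)
qed

lemma SA_sum:
  assumes "\<And>i. i \<in> I \<Longrightarrow> f i \<in> SA M B"
  shows "(\<lambda>z. \<Sum>i\<in>I. f i z) \<in> SA M B"
  using assms
proof (induction I rule: infinite_finite_induct)
  case (insert x F)
  then show ?case using SA_add[of "f x" "\<lambda>z. \<Sum>i\<in>F. f i z"] by simp
qed (auto simp: SA_zero)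

lemma SA_diff:
  assumes f: "f \<in> SA M B" and g: "g \<in> SA M B"
  shows "(\<lambda>z. f z - g z) \<in> SA M B"
  using SA_add[OF f SA_scale[OF g, of "-1"]] by simp

end




lemma L2H_normfun:
  fixes f :: "'z \<Rightarrow> 'h::{real_inner, second_countable_topology}"
  assumes "f \<in> L2H M"
  shows "(\<lambda>z. norm (f z)) \<in> L2H M" "L2Hnorm M (\<lambda>z. norm (f z)) = L2Hnorm M f"
  using assms by (auto simp: L2H_def L2Hnorm_def)

lemma L2H_const:
  assumes "prob_space M"
  shows "(\<lambda>z. c :: real) \<in> L2H M" "L2Hnorm M (\<lambda>z. c :: real) = \<bar>c\<bar>"
proof -
  interpret prob_space M by fact
  show "(\<lambda>z. c :: real) \<in> L2H M" by (auto simp: L2H_def)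
  show "L2Hnorm M (\<lambda>z. c :: real) = \<bar>c\<bar>" by (simp add: L2Hnorm_def prob_space)
qed

lemma L2H_integrable_real:
  fixes f :: "'z \<Rightarrow> real"
  assumes "prob_space M" "f \<in> L2H M"
  shows "integrable M f" "\<bar>\<integral>z. f z \<partial>M\<bar> \<le> L2Hnorm M f"
proof -
  have "integrable M (\<lambda>z. inner (f z) ((\<lambda>z. 1::real) z))"
    by (rule L2H_inner_integrable[OF assms(2) L2H_const(1)[OF assms(1)]])
  then show "integrable M f" by simp
  have "\<bar>Ip M f (\<lambda>z. 1::real)\<bar> \<le> L2Hnorm M f * L2Hnorm M (\<lambda>z. 1::real)"
    by (rule Ip_CS[OF assms(2) L2H_const(1)[OF assms(1)]])
  then show "\<bar>\<integral>z. f z \<partial>M\<bar> \<le> L2Hnorm M f"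
    by (simp add: Ip_def L2H_const(2)[OF assms(1)])
qed

lemma norm_diff_le_sum_steps:
  fixes X :: "nat \<Rightarrow> 'a::real_normed_vector"
  shows "m \<le> n \<Longrightarrow> norm (X n - X m) \<le> (\<Sum>i\<in>{m..<n}. norm (X (Suc i) - X i))"
proof (induction n)
  case 0
  then show ?case by simp
next
  case (Suc n)
  show ?case
  proof (cases "m = Suc n")
    case True
    then show ?thesis by simp
  next
    case False
    then have "m \<le> n" using Suc.prems by simp
    have "norm (X (Suc n) - X m) \<le> norm (X (Suc n) - X n) + norm (X n - X m)"
      using norm_triangle_ineq[of "X (Suc n) - X n" "X n - X m"] by simp
    also have "\<dots> \<le> norm (X (Suc n) - X n) + (\<Sum>i\<in>{m..<n}. norm (X (Suc i) - X i))"
      using Suc.IH[OF \<open>m \<le> n\<close>] by simp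
    also have "\<dots> = (\<Sum>i\<in>{m..<Suc n}. norm (X (Suc i) - X i))"
      using \<open>m \<le> n\<close> by (simp add: sum.atLeastLessThan_Suc)
    finally show ?thesis .
  qed
qed

lemma Cauchy_of_summable_steps:
  fixes X :: "nat \<Rightarrow> 'a::real_normed_vector"
  assumes s: "summable (\<lambda>i. norm (X (Suc i) - X i))"
  shows "Cauchy X"
proof (rule metric_CauchyI)
  fix e :: real assume "e > 0"
  define d where "d i = norm (X (Suc i) - X i)" for i
  have sd: "summable d" unfolding d_def[abs_def] using s .
  obtain N where N: "\<And>n. n \<ge> N \<Longrightarrow> norm (\<Sum>i. d (i + n)) < e"
    using suminf_exist_split[OF \<open>e > 0\<close> sd] by blast
  have key: "norm (X n - X m) < e" if "N \<le> m" "m \<le> n" for m n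
  proof -
    have "norm (X n - X m) \<le> (\<Sum>i\<in>{m..<n}. d i)"
      using norm_diff_le_sum_steps[OF \<open>m \<le> n\<close>, of X] by (simp add: d_def)
    also have "\<dots> = (\<Sum>i<n - m. d (i + m))"
    proof -
      have "(\<Sum>i\<in>{m..<n}. d i) = (\<Sum>i\<in>{0+m..<(n-m)+m}. d i)" using \<open>m \<le> n\<close> by simp
      also have "\<dots> = (\<Sum>i\<in>{0..<n-m}. d (i + m))" by (rule sum.shift_bounds_nat_ivl)
      finally show ?thesis by (simp add: atLeast0LessThan)
    qed
    also have "\<dots> \<le> (\<Sum>i. d (i + m))"
    proof (rule sum_le_suminf)
      show "summable (\<lambda>i. d (i + m))" using sd by (subst summable_iff_shift)
    qed (auto simp: d_def)
    also have "\<dots> \<le> norm (\<Sum>i. d (i + m))" by simp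
    also have "\<dots> < e" using N \<open>N \<le> m\<close> by simp
    finally show ?thesis .
  qed
  show "\<exists>M. \<forall>m\<ge>M. \<forall>n\<ge>M. dist (X m) (X n) < e"
  proof (intro exI allI impI)
    fix m n assume "N \<le> m" "N \<le> n"
    show "dist (X m) (X n) < e"
    proof (cases "m \<le> n")
      case True
      then show ?thesis using key[OF \<open>N \<le> m\<close> True] by (simp add: dist_norm norm_minus_commute)
    next
      case False
      then show ?thesis using key[OF \<open>N \<le> n\<close>, of m] by (simp add: dist_norm)
    qed
  qed
qed


lemma L2H_complete:
  fixes g :: "nat \<Rightarrow> 'z \<Rightarrow> 'h::{real_inner, polish_space}"
  assumes P: "prob_space M" and gL: "\<And>n. g n \<in> L2H M"
    and C: "\<And>\<epsilon>. \<epsilon> > 0 \<Longrightarrow> \<exists>N. \<forall>m\<ge>N. \<forall>n\<ge>N. L2Hnorm M (\<lambda>z. g m z - g n z) < \<epsilon>"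
  shows "\<exists>f\<in>L2H M. \<forall>\<epsilon>>0. \<exists>N. \<forall>n\<ge>N. L2Hnorm M (\<lambda>z. g n z - f z) < \<epsilon>"
proof -
  interpret prob_space M by fact
  have "\<forall>k. \<exists>N. \<forall>m\<ge>N. \<forall>n\<ge>N. L2Hnorm M (\<lambda>z. g m z - g n z) < (1/2::real)^k"
    using C by simp
  from choice[OF this] obtain R where R0: "\<forall>k. \<forall>m\<ge>R k. \<forall>n\<ge>R k. L2Hnorm M (\<lambda>z. g m z - g n z) < (1/2::real)^k"
    by blast
  have R: "\<And>k m n. m \<ge> R k \<Longrightarrow> n \<ge> R k \<Longrightarrow> L2Hnorm M (\<lambda>z. g m z - g n z) < (1/2::real)^k"
    using R0 by blast
  define r where "r k = (\<Sum>j\<le>k. R j)" for k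
  have rR: "R k \<le> r j" if "k \<le> j" for k j
    unfolding r_def by (rule member_le_sum) (use that in auto)
  define G where "G k = g (r k)" for k
  have GL: "G k \<in> L2H M" for k by (simp add: G_def gL)
  have [measurable]: "G k \<in> borel_measurable M" for k using GL by (simp add: L2H_def)
  have Gc: "L2Hnorm M (\<lambda>z. G j z - G k z) < (1/2::real)^k" if "k \<le> j" for j k
    unfolding G_def by (rule R) (use rR that in auto)
  define d where "d k z = norm (G (Suc k) z - G k z)" for k z
  have dL: "d k \<in> L2H M" for k
    unfolding d_def by (rule L2H_normfun(1)[OF L2H_diff[OF GL GL]])
  have [measurable]: "d k \<in> borel_measurable M" for k using dL by (simp add: L2H_def)
  have dint: "integrable M (d k)" for k by (rule L2H_integrable_real(1)[OF P dL])
  have dle: "(\<integral>z. d k z \<partial>M) \<le> (1/2::real)^k" for k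
  proof -
    have "(\<integral>z. d k z \<partial>M) \<le> L2Hnorm M (d k)"
      using L2H_integrable_real(2)[OF P dL, of k] by simp
    also have "\<dots> = L2Hnorm M (\<lambda>z. G (Suc k) z - G k z)"
      unfolding d_def[abs_def] by (rule L2H_normfun(2)[OF L2H_diff[OF GL GL]])
    also have "\<dots> < (1/2)^k" by (rule Gc) simp
    finally show ?thesis by simp
  qed
  have dnn: "d k z \<ge> 0" for k z by (simp add: d_def)
  have "(\<integral>\<^sup>+z. (\<Sum>k. ennreal (d k z)) \<partial>M) = (\<Sum>k. \<integral>\<^sup>+z. ennreal (d k z) \<partial>M)"
    by (rule nn_integral_suminf) measurable
  also have "\<dots> = (\<Sum>k. ennreal (\<integral>z. d k z \<partial>M))"
    by (subst nn_integral_eq_integral[OF dint]) (auto simp: dnn)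
  also have "\<dots> \<le> (\<Sum>k. ennreal ((1/2::real)^k))"
    by (rule suminf_le) (auto simp: dle)
  also have "\<dots> = ennreal (\<Sum>k. (1/2::real)^k)"
    by (rule suminf_ennreal2) auto
  also have "\<dots> < \<infinity>" by simp
  finally have fin: "(\<integral>\<^sup>+z. (\<Sum>k. ennreal (d k z)) \<partial>M) \<noteq> \<infinity>" by simp
  have "AE z in M. (\<Sum>k. ennreal (d k z)) \<noteq> \<infinity>"
    by (rule nn_integral_PInf_AE[OF _ fin]) measurable
  then have AEC: "AE z in M. Cauchy (\<lambda>k. G k z)"
  proof (rule AE_mp, intro AE_I2 impI)
    fix z assume "(\<Sum>k. ennreal (d k z)) \<noteq> \<infinity>"
    then have "summable (\<lambda>k. d k z)"
      by (intro summable_suminf_not_top) (auto simp: dnn)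
    then show "Cauchy (\<lambda>k. G k z)"
      by (intro Cauchy_of_summable_steps) (simp add: d_def)
  qed
  define f where "f z = (if Cauchy (\<lambda>k. G k z) then lim (\<lambda>k. G k z) else 0)" for z
  define F where "F k z = (if Cauchy (\<lambda>k. G k z) then G k z else 0)" for k z
  have Flim: "(\<lambda>k. F k z) \<longlonglongrightarrow> f z" for z
  proof (cases "Cauchy (\<lambda>k. G k z)")
    case True
    then have "convergent (\<lambda>k. G k z)" by (rule Cauchy_convergent)
    then show ?thesis using True by (simp add: F_def f_def convergent_LIMSEQ_iff)
  next
    case False
    then show ?thesis by (simp add: F_def f_def)
  qed
  have Fm: "F k \<in> borel_measurable M" for k
  proof -
    have "{z \<in> space M. Cauchy (\<lambda>k. G k z)} \<in> sets M" by (rule sets_Collect_Cauchy) simp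
    then show ?thesis unfolding F_def
      by (rule measurable_If[rotated 2]) simp_all
  qed
  have fm[measurable]: "f \<in> borel_measurable M"
    by (rule borel_measurable_LIMSEQ_metric[OF Fm Flim])
  have AEl: "AE z in M. (\<lambda>k. G k z) \<longlonglongrightarrow> f z"
    using AEC
  proof eventually_elim
    case (elim z)
    have "(\<lambda>k. F k z) = (\<lambda>k. G k z)" using elim by (simp add: F_def)
    then show ?case using Flim[of z] by simp
  qed
  have tail: "(\<integral>\<^sup>+z. ennreal ((norm (G k z - f z))\<^sup>2) \<partial>M) \<le> ennreal (((1/2::real)^k)\<^sup>2)" for k
  proof -
    have "(\<integral>\<^sup>+z. ennreal ((norm (G k z - f z))\<^sup>2) \<partial>M)
        = (\<integral>\<^sup>+z. liminf (\<lambda>j. ennreal ((norm (G k z - G j z))\<^sup>2)) \<partial>M)"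
    proof (rule nn_integral_cong_AE)
      show "AE z in M. ennreal ((norm (G k z - f z))\<^sup>2) = liminf (\<lambda>j. ennreal ((norm (G k z - G j z))\<^sup>2))"
        using AEl
      proof eventually_elim
        case (elim z)
        have tl: "(\<lambda>j. ennreal ((norm (G k z - G j z))\<^sup>2)) \<longlonglongrightarrow> ennreal ((norm (G k z - f z))\<^sup>2)"
          by (intro tendsto_intros elim)
        show ?case by (rule lim_imp_Liminf[OF trivial_limit_sequentially tl, symmetric])
      qed
    qed
    also have "\<dots> \<le> liminf (\<lambda>j. \<integral>\<^sup>+z. ennreal ((norm (G k z - G j z))\<^sup>2) \<partial>M)"
      by (rule nn_integral_liminf) measurable
    also have "\<dots> \<le> ennreal (((1/2::real)^k)\<^sup>2)"
    proof (rule Liminf_le)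
      show "eventually (\<lambda>j. (\<integral>\<^sup>+z. ennreal ((norm (G k z - G j z))\<^sup>2) \<partial>M) \<le> ennreal (((1/2::real)^k)\<^sup>2)) sequentially"
        unfolding eventually_sequentially
      proof (intro exI allI impI)
        fix j assume "k \<le> j"
        have L: "(\<lambda>z. G k z - G j z) \<in> L2H M" by (rule L2H_diff[OF GL GL])
        have "(\<integral>\<^sup>+z. ennreal ((norm (G k z - G j z))\<^sup>2) \<partial>M) = ennreal (\<integral>z. (norm (G k z - G j z))\<^sup>2 \<partial>M)"
          using L by (intro nn_integral_eq_integral) (auto simp: L2H_def)
        also have "(\<integral>z. (norm (G k z - G j z))\<^sup>2 \<partial>M) = (L2Hnorm M (\<lambda>z. G k z - G j z))\<^sup>2"
          by (simp add: L2Hnorm_def)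
        also have "\<dots> = (L2Hnorm M (\<lambda>z. G j z - G k z))\<^sup>2"
          using L2Hnorm_minus_commute[of M "G k" "G j"] by simp
        also have "\<dots> \<le> ((1/2::real)^k)\<^sup>2"
          using Gc[OF \<open>k \<le> j\<close>] by (intro power_mono) (auto simp: L2Hnorm_nonneg)
        finally show "(\<integral>\<^sup>+z. ennreal ((norm (G k z - G j z))\<^sup>2) \<partial>M) \<le> ennreal (((1/2::real)^k)\<^sup>2)"
          by (simp add: ennreal_leI)
      qed
    qed simp
    finally show ?thesis .
  qed
  have hL: "(\<lambda>z. G k z - f z) \<in> L2H M" for k
  proof -
    have lt: "(\<integral>\<^sup>+z. ennreal ((norm (G k z - f z))\<^sup>2) \<partial>M) < \<infinity>"
      using tail[of k] by (rule le_less_trans) simp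
    have "integrable M (\<lambda>z. (norm (G k z - f z))\<^sup>2)"
      by (rule integrableI_nonneg[OF _ _ lt]) auto
    then show ?thesis by (simp add: L2H_def)
  qed
  have hN: "L2Hnorm M (\<lambda>z. G k z - f z) \<le> (1/2::real)^k" for k
  proof -
    have "ennreal (\<integral>z. (norm (G k z - f z))\<^sup>2 \<partial>M) = (\<integral>\<^sup>+z. ennreal ((norm (G k z - f z))\<^sup>2) \<partial>M)"
      using hL[of k] by (intro nn_integral_eq_integral[symmetric]) (auto simp: L2H_def)
    also have "\<dots> \<le> ennreal (((1/2::real)^k)\<^sup>2)" by (rule tail)
    finally have "(\<integral>z. (norm (G k z - f z))\<^sup>2 \<partial>M) \<le> ((1/2::real)^k)\<^sup>2"
      by (subst (asm) ennreal_le_iff) auto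
    then have "sqrt (\<integral>z. (norm (G k z - f z))\<^sup>2 \<partial>M) \<le> sqrt (((1/2::real)^k)\<^sup>2)"
      by (rule real_sqrt_le_mono)
    then show ?thesis by (simp add: L2Hnorm_def)
  qed
  have fL: "f \<in> L2H M"
    using L2H_diff[OF GL hL, of 0 0] by simp
  show ?thesis
  proof (intro bexI[OF _ fL] allI impI)
    fix \<epsilon> :: real assume "\<epsilon> > 0"
    obtain k where k: "(1/2::real)^k < \<epsilon>/2"
      using real_arch_pow_inv[of "\<epsilon>/2" "1/2"] \<open>\<epsilon> > 0\<close> by auto
    show "\<exists>N. \<forall>n\<ge>N. L2Hnorm M (\<lambda>z. g n z - f z) < \<epsilon>"
    proof (intro exI allI impI)
      fix n assume "r k \<le> n"
      have "L2Hnorm M (\<lambda>z. g n z - f z) \<le> L2Hnorm M (\<lambda>z. g n z - G k z) + L2Hnorm M (\<lambda>z. G k z - f z)"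
        by (rule L2Hnorm_triangle_diff[OF gL fL GL])
      also have "L2Hnorm M (\<lambda>z. g n z - G k z) < (1/2)^k"
        unfolding G_def by (rule R) (use rR[of k k] \<open>r k \<le> n\<close> in auto)
      finally show "L2Hnorm M (\<lambda>z. g n z - f z) < \<epsilon>" using hN[of k] k by simp
    qed
  qed
qed




lemma Ip_parallelogram:
  fixes u v :: "'z \<Rightarrow> 'h::{real_inner, second_countable_topology}"
  assumes "u \<in> L2H M" "v \<in> L2H M"
  shows "Ip M (\<lambda>z. v z - u z) (\<lambda>z. v z - u z) + Ip M (\<lambda>z. u z + v z) (\<lambda>z. u z + v z)
       = 2 * Ip M u u + 2 * Ip M v v"
  using Ip_expand_diff[OF assms(2,1)] Ip_expand_add[OF assms] Ip_sym[of M u v] by simp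

lemma proj_exists:
  fixes f :: "'z \<Rightarrow> 'h::{real_inner, polish_space}"
    and B :: "('z \<Rightarrow> 'h) set"
  assumes P: "prob_space M"
    and BL2: "B \<subseteq> L2H M"
    and Bscale: "\<And>a c. a \<in> B \<Longrightarrow> (\<lambda>z. c *\<^sub>R a z) \<in> B"
    and fL: "f \<in> L2H M"
  shows "\<exists>g\<in>SA M B. \<forall>k\<in>SA M B. Ip M (\<lambda>z. f z - g z) k = 0"
proof -
  let ?S = "SA M B"
  have SL: "g \<in> ?S \<Longrightarrow> g \<in> L2H M" for g using SA_L2H[OF BL2 Bscale] by blast
  have Sadd: "g \<in> ?S \<Longrightarrow> h \<in> ?S \<Longrightarrow> (\<lambda>z. g z + h z) \<in> ?S" for g h
    using SA_add[OF BL2 Bscale] by blast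
  have Sscale: "g \<in> ?S \<Longrightarrow> (\<lambda>z. c *\<^sub>R g z) \<in> ?S" for g c
    using SA_scale[OF BL2 Bscale] by blast
  have S0: "(\<lambda>z. 0) \<in> ?S" using SA_zero[OF BL2 Bscale] by blast
  define Q where "Q g = Ip M (\<lambda>z. f z - g z) (\<lambda>z. f z - g z)" for g
  have Q_eq: "Q g = (L2Hnorm M (\<lambda>z. f z - g z))\<^sup>2" for g by (simp add: Q_def L2Hnorm_sq)
  have Q0: "Q g \<ge> 0" for g by (simp add: Q_def Ip_nonneg)
  define D where "D = Q ` ?S"
  define d where "d = Inf D"
  have Dne: "D \<noteq> {}" using S0 by (auto simp: D_def)
  have Dbdd: "bdd_below D" by (auto simp: D_def intro!: bdd_belowI[of _ 0] Q0)
  have dle: "d \<le> Q g" if "g \<in> ?S" for g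
    unfolding d_def by (rule cInf_lower) (use that Dbdd in \<open>auto simp: D_def\<close>)
  have d0: "d \<ge> 0" unfolding d_def by (rule cInf_greatest[OF Dne]) (auto simp: D_def Q0)
  have "\<forall>n. \<exists>g. g \<in> ?S \<and> Q g < d + (1 / real (Suc n))\<^sup>2"
  proof
    fix n
    have "Inf D < d + (1 / real (Suc n))\<^sup>2" by (simp add: d_def)
    then obtain x where "x \<in> D" "x < d + (1 / real (Suc n))\<^sup>2" using cInf_lessD[OF Dne] by blast
    then show "\<exists>g. g \<in> ?S \<and> Q g < d + (1 / real (Suc n))\<^sup>2" by (auto simp: D_def)
  qed
  from choice[OF this] obtain g where g: "\<And>n. g n \<in> ?S" "\<And>n. Q (g n) < d + (1 / real (Suc n))\<^sup>2"
    by blast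
  have gL: "g n \<in> L2H M" for n using SL[OF g(1)] .
  have par: "(L2Hnorm M (\<lambda>z. g m z - g n z))\<^sup>2 \<le> 2 * (1 / real (Suc m))\<^sup>2 + 2 * (1 / real (Suc n))\<^sup>2" for m n
  proof -
    define u where "u z = f z - g m z" for z
    define v where "v z = f z - g n z" for z
    have uL: "u \<in> L2H M" unfolding u_def[abs_def] by (rule L2H_diff[OF fL gL])
    have vL: "v \<in> L2H M" unfolding v_def[abs_def] by (rule L2H_diff[OF fL gL])
    have mid: "(\<lambda>z. (1/2::real) *\<^sub>R (g m z + g n z)) \<in> ?S" by (intro Sscale Sadd g)
    have e1: "(\<lambda>z. v z - u z) = (\<lambda>z. g m z - g n z)" by (auto simp: u_def v_def)
    have e2: "(\<lambda>z. u z + v z) = (\<lambda>z. 2 *\<^sub>R (f z - (1/2::real) *\<^sub>R (g m z + g n z)))"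
      by (auto simp: u_def v_def algebra_simps scaleR_2)
    have "Ip M (\<lambda>z. u z + v z) (\<lambda>z. u z + v z) = 4 * Q (\<lambda>z. (1/2::real) *\<^sub>R (g m z + g n z))"
      unfolding e2 by (simp add: Ip_scale_left Ip_scale_right Q_def)
    moreover have "Q (\<lambda>z. (1/2::real) *\<^sub>R (g m z + g n z)) \<ge> d" by (rule dle[OF mid])
    moreover have "Ip M u u = Q (g m)" "Ip M v v = Q (g n)" by (simp_all add: Q_def u_def[abs_def] v_def[abs_def])
    moreover note Ip_parallelogram[OF uL vL] g(2)[of m] g(2)[of n]
    ultimately have "Ip M (\<lambda>z. g m z - g n z) (\<lambda>z. g m z - g n z) \<le> 2 * (1 / real (Suc m))\<^sup>2 + 2 * (1 / real (Suc n))\<^sup>2"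
      unfolding e1 by linarith
    then show ?thesis by (simp add: L2Hnorm_sq)
  qed
  have cauchy: "\<exists>N. \<forall>m\<ge>N. \<forall>n\<ge>N. L2Hnorm M (\<lambda>z. g m z - g n z) < \<epsilon>" if "\<epsilon> > 0" for \<epsilon>
  proof -
    obtain N :: nat where N: "2 / \<epsilon> < real N" using reals_Archimedean2 by blast
    have Npos: "real N > 0" using N that by (smt (verit) divide_pos_pos)
    have inv: "1 / real (Suc n) < \<epsilon> / 2" if "n \<ge> N" for n
    proof -
      have "2 / \<epsilon> < real (Suc n)" using N that by simp
      then have "2 < \<epsilon> * real (Suc n)" using \<open>\<epsilon> > 0\<close> by (simp add: field_simps)
      then show ?thesis by (simp add: field_simps)
    qed
    show ?thesis
    proof (intro exI allI impI)
      fix m n assume mn: "N \<le> m" "N \<le> n"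
      have a: "(1 / real (Suc m))\<^sup>2 < (\<epsilon>/2)\<^sup>2" using inv[OF mn(1)]
        by (intro power_strict_mono) auto
      have b: "(1 / real (Suc n))\<^sup>2 < (\<epsilon>/2)\<^sup>2" using inv[OF mn(2)]
        by (intro power_strict_mono) auto
      have "(L2Hnorm M (\<lambda>z. g m z - g n z))\<^sup>2 < \<epsilon>\<^sup>2"
        using par[of m n] a b by (simp add: power_divide)
      then show "L2Hnorm M (\<lambda>z. g m z - g n z) < \<epsilon>"
        using \<open>\<epsilon> > 0\<close> by (smt (verit) L2Hnorm_nonneg power_mono)
    qed
  qed
  obtain g0 where g0L: "g0 \<in> L2H M" and g0lim: "\<And>\<epsilon>. \<epsilon> > 0 \<Longrightarrow> \<exists>N. \<forall>n\<ge>N. L2Hnorm M (\<lambda>z. g n z - g0 z) < \<epsilon>"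
    using L2H_complete[OF P gL cauchy] by blast
  have g0S: "g0 \<in> ?S"
  proof (rule SA_closed[OF BL2 Bscale g0L])
    fix \<epsilon> :: real assume "\<epsilon> > 0"
    then obtain N where "\<forall>n\<ge>N. L2Hnorm M (\<lambda>z. g n z - g0 z) < \<epsilon>" using g0lim by blast
    then have "L2Hnorm M (\<lambda>z. g0 z - g N z) < \<epsilon>" using L2Hnorm_minus_commute[of M g0 "g N"] by simp
    then show "\<exists>h\<in>?S. L2Hnorm M (\<lambda>z. g0 z - h z) < \<epsilon>" using g(1) by blast
  qed
  have Qg0: "Q g0 \<le> d"
  proof -
    have "L2Hnorm M (\<lambda>z. f z - g0 z) \<le> sqrt d + \<epsilon>" if "\<epsilon> > 0" for \<epsilon>
    proof -
      obtain N1 where N1: "\<forall>n\<ge>N1. L2Hnorm M (\<lambda>z. g n z - g0 z) < \<epsilon>/2" using g0lim \<open>\<epsilon> > 0\<close>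
        by (meson half_gt_zero)
      obtain N2 :: nat where N2: "2 / \<epsilon> < real N2" using reals_Archimedean2 by blast
      define n where "n = max N1 N2"
      have inv: "1 / real (Suc n) < \<epsilon> / 2"
      proof -
        have "2 / \<epsilon> < real (Suc n)" using N2 by (simp add: n_def)
        then have "2 < \<epsilon> * real (Suc n)" using \<open>\<epsilon> > 0\<close> by (simp add: field_simps)
        then show ?thesis by (simp add: field_simps)
      qed
      have "L2Hnorm M (\<lambda>z. f z - g0 z) \<le> L2Hnorm M (\<lambda>z. f z - g n z) + L2Hnorm M (\<lambda>z. g n z - g0 z)"
        by (rule L2Hnorm_triangle_diff[OF fL g0L gL])
      also have "L2Hnorm M (\<lambda>z. f z - g n z) \<le> sqrt d + 1 / real (Suc n)"
      proof -
        have "L2Hnorm M (\<lambda>z. f z - g n z) = sqrt (Q (g n))" using Q_eq[of "g n"] L2Hnorm_nonneg[of M "\<lambda>z. f z - g n z"]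
          by simp
        also have "\<dots> \<le> sqrt (d + (1 / real (Suc n))\<^sup>2)" using g(2)[of n] by simp
        also have "\<dots> \<le> sqrt d + sqrt ((1 / real (Suc n))\<^sup>2)" by (rule sqrt_add_le_add_sqrt) (use d0 in auto)
        also have "\<dots> = sqrt d + 1 / real (Suc n)" by simp
        finally show ?thesis .
      qed
      also have "L2Hnorm M (\<lambda>z. g n z - g0 z) < \<epsilon>/2" using N1 by (simp add: n_def)
      finally show ?thesis using inv by simp
    qed
    then have "L2Hnorm M (\<lambda>z. f z - g0 z) \<le> sqrt d" by (rule field_le_epsilon)
    then have "(L2Hnorm M (\<lambda>z. f z - g0 z))\<^sup>2 \<le> (sqrt d)\<^sup>2"
      by (intro power_mono) (auto simp: L2Hnorm_nonneg)
    then show ?thesis using d0 by (simp add: Q_eq)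
  qed
  show ?thesis
  proof (intro bexI[OF _ g0S] ballI)
    fix k assume kS: "k \<in> ?S"
    have kL: "k \<in> L2H M" by (rule SL[OF kS])
    define u where "u z = f z - g0 z" for z
    have uL: "u \<in> L2H M" unfolding u_def[abs_def] by (rule L2H_diff[OF fL g0L])
    define c where "c = Ip M u k"
    define a where "a = Ip M k k"
    have a0: "a \<ge> 0" by (simp add: a_def Ip_nonneg)
    have ineq: "0 \<le> - 2 * t * c + t\<^sup>2 * a" for t
    proof -
      have S1: "(\<lambda>z. g0 z + t *\<^sub>R k z) \<in> ?S" by (intro Sadd Sscale g0S kS)
      have "Q g0 \<le> Q (\<lambda>z. g0 z + t *\<^sub>R k z)" using Qg0 dle[OF S1] by linarith
      also have "Q (\<lambda>z. g0 z + t *\<^sub>R k z) = Ip M (\<lambda>z. u z - t *\<^sub>R k z) (\<lambda>z. u z - t *\<^sub>R k z)"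
        by (simp add: Q_def u_def algebra_simps)
      also have "\<dots> = Ip M u u - 2 * (t * c) + t\<^sup>2 * a"
        using Ip_expand_diff[OF uL L2H_scale[OF kL, of t]]
        by (simp add: Ip_scale_left Ip_scale_right c_def a_def power2_eq_square)
      finally show ?thesis by (simp add: Q_def u_def[abs_def])
    qed
    have "c = 0"
    proof (rule ccontr)
      assume "c \<noteq> 0"
      have "0 \<le> - 2 * (c / (a + 1)) * c + (c / (a + 1))\<^sup>2 * a" by (rule ineq)
      also have "\<dots> = c\<^sup>2 / (a + 1) * (a / (a + 1) - 2)"
      proof -
        have "a + 1 \<noteq> 0" using a0 by simp
        then show ?thesis by (simp add: divide_simps power2_eq_square) (simp add: algebra_simps)
      qed
      also have "\<dots> < 0"
      proof (rule mult_pos_neg)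
        show "0 < c\<^sup>2 / (a + 1)" using \<open>c \<noteq> 0\<close> a0 by simp
        have "a / (a + 1) < 1" using a0 by simp
        then show "a / (a + 1) - 2 < 0" by simp
      qed
      finally show False by simp
    qed
    then show "Ip M (\<lambda>z. f z - g0 z) k = 0" by (simp add: c_def u_def[abs_def])
  qed
qed




lemma dens_props:
  assumes ms: "model_setting lam M" and QM: "Q \<in> M"
  shows "dens lam Q \<in> borel_measurable lam"
    and "\<And>z. dens lam Q z \<ge> 0"
    and "\<And>f. f \<in> borel_measurable lam \<Longrightarrow> integrable Q f \<longleftrightarrow> integrable lam (\<lambda>z. dens lam Q z * f z)"
    and "\<And>f. f \<in> borel_measurable lam \<Longrightarrow> (\<integral>z. f z \<partial>Q) = (\<integral>z. dens lam Q z * f z \<partial>lam)"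
    and "integrable lam (dens lam Q)"
    and "(\<integral>z. dens lam Q z \<partial>lam) = 1"
proof -
  have sf: "sigma_finite_measure lam" and sl: "sets lam = sets borel"
    and Q: "prob_space Q" "sets Q = sets borel" "absolutely_continuous lam Q"
    using ms QM by (auto simp: model_setting_def)
  interpret sigma_finite_measure lam by (rule sf)
  interpret Q: prob_space Q by (rule Q(1))
  have sQ: "sets Q = sets lam" using Q(2) sl by simp
  have sfQ: "sigma_finite_measure Q" by unfold_locales
  show dm: "dens lam Q \<in> borel_measurable lam" unfolding dens_def[abs_def] by measurable
  show "\<And>z. dens lam Q z \<ge> 0" by (simp add: dens_def)
  show I: "\<And>f. f \<in> borel_measurable lam \<Longrightarrow> integrable Q f \<longleftrightarrow> integrable lam (\<lambda>z. dens lam Q z * f z)"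
    unfolding dens_def by (rule RN_deriv_integrable[OF sfQ Q(3) sQ])
  show J: "\<And>f. f \<in> borel_measurable lam \<Longrightarrow> (\<integral>z. f z \<partial>Q) = (\<integral>z. dens lam Q z * f z \<partial>lam)"
    unfolding dens_def by (rule RN_deriv_integral[OF sfQ Q(3) sQ])
  have "integrable Q (\<lambda>z. 1::real)" by simp
  then show "integrable lam (dens lam Q)" using I[of "\<lambda>z. 1"] by simp
  have "(\<integral>z. 1 \<partial>Q) = (1::real)" by (simp add: Q.prob_space)
  then show "(\<integral>z. dens lam Q z \<partial>lam) = 1" using J[of "\<lambda>z. 1"] by simp
qed

lemma sqrt_dens_L2H:
  assumes ms: "model_setting lam M" and QM: "Q \<in> M"
  shows "(\<lambda>z. sqrt (dens lam Q z)) \<in> L2H lam"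
    and "Ip lam (\<lambda>z. sqrt (dens lam Q z)) (\<lambda>z. sqrt (dens lam Q z)) = 1"
proof -
  note dp = dens_props[OF ms QM]
  have eq: "(\<lambda>z. (norm (sqrt (dens lam Q z)))\<^sup>2) = dens lam Q"
    using dp(2) by (auto simp: fun_eq_iff)
  have [measurable]: "dens lam Q \<in> borel_measurable lam" by (rule dp(1))
  show "(\<lambda>z. sqrt (dens lam Q z)) \<in> L2H lam"
    unfolding L2H_def using dp(5) eq by auto
  show "Ip lam (\<lambda>z. sqrt (dens lam Q z)) (\<lambda>z. sqrt (dens lam Q z)) = 1"
    unfolding Ip_def using dp(2,6) by simp
qed

lemma score_mean_zero:
  assumes ms: "model_setting lam M" and PM: "P \<in> M" and sub: "submodel lam M P Pe s"
  shows "(\<integral>z. s z \<partial>P) = 0"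
proof -
  have sl: "sets lam = sets borel" and sP: "sets P = sets borel" and Pprob: "prob_space P"
    using ms PM by (auto simp: model_setting_def)
  have Pe0: "Pe 0 = P" and evM: "\<forall>\<^sub>F e in at 0. Pe e \<in> M" and sL2: "s \<in> L2 P"
    and dqm: "((\<lambda>e. (\<integral>\<^sup>+ z. ennreal ((sqrt (dens lam (Pe e) z) - sqrt (dens lam P z)
                 - e * s z * sqrt (dens lam P z) / 2)\<^sup>2) \<partial>lam) / ennreal (e\<^sup>2)) \<longlongrightarrow> 0) (at 0)"
    using sub by (auto simp: submodel_def)
  note dP = dens_props[OF ms PM]
  define p where "p = dens lam P"
  define a where "a z = sqrt (p z)" for z
  define u where "u z = s z * sqrt (p z) / 2" for z
  have [measurable]: "p \<in> borel_measurable lam" using dP(1) by (simp add: p_def)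
  have p0: "p z \<ge> 0" for z using dP(2) by (simp add: p_def)
  have sPm: "s \<in> borel_measurable P" and s2P: "integrable P (\<lambda>z. (s z)\<^sup>2)"
    using sL2 by (auto simp: L2_def)
  have [measurable]: "s \<in> borel_measurable lam"
    using sPm measurable_cong_sets[of P lam borel borel] sP sl by simp
  have aL: "a \<in> L2H lam" and aa: "Ip lam a a = 1"
    using sqrt_dens_L2H[OF ms PM] by (simp_all add: a_def[abs_def] p_def)
  have uL: "u \<in> L2H lam"
  proof -
    have "integrable lam (\<lambda>z. p z * (s z)\<^sup>2)"
      using dP(3)[of "\<lambda>z. (s z)\<^sup>2"] s2P by (simp add: p_def)
    then have "integrable lam (\<lambda>z. (1/4) * (p z * (s z)\<^sup>2))" by simp
    moreover have "(\<lambda>z. (1/4) * (p z * (s z)\<^sup>2)) = (\<lambda>z. (norm (u z))\<^sup>2)"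
      using p0 by (auto simp: fun_eq_iff u_def power_mult_distrib power_divide)
    ultimately have I: "integrable lam (\<lambda>z. (norm (u z))\<^sup>2)" by metis
    have um: "u \<in> borel_measurable lam" unfolding u_def[abs_def] by measurable
    show ?thesis unfolding L2H_def using I um by blast
  qed
  have sint: "integrable P s" by (rule L2H_integrable_real(1)[OF Pprob]) (use sL2 in \<open>simp add: L2_def L2H_def\<close>)
  have au: "Ip lam a u = (\<integral>z. s z \<partial>P) / 2"
  proof -
    have "Ip lam a u = (\<integral>z. (1/2) * (p z * s z) \<partial>lam)"
      unfolding Ip_def a_def u_def using p0
      by (intro Bochner_Integration.integral_cong) (auto simp: real_sqrt_mult[symmetric])
    also have "\<dots> = (1/2) * (\<integral>z. p z * s z \<partial>lam)" by simp
    also have "(\<integral>z. p z * s z \<partial>lam) = (\<integral>z. s z \<partial>P)" using dP(4)[of s] by (simp add: p_def)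
    finally show ?thesis by simp
  qed
  define r where "r e z = sqrt (dens lam (Pe e) z) - sqrt (dens lam P z) - e * s z * sqrt (dens lam P z) / 2" for e z
  define \<rho> where "\<rho> e = L2Hnorm lam (r e) / \<bar>e\<bar>" for e
  have evr: "\<forall>\<^sub>F e in at (0::real). e \<noteq> 0 \<and> Pe e \<in> M"
    using evM eventually_neq_at_within[of 0 0 UNIV] by eventually_elim auto
  have rL: "r e \<in> L2H lam" if "Pe e \<in> M" for e
  proof -
    have "(\<lambda>z. sqrt (dens lam (Pe e) z) - a z - e *\<^sub>R u z) \<in> L2H lam"
      by (intro L2H_diff L2H_scale sqrt_dens_L2H(1)[OF ms that] aL uL)
    moreover have "(\<lambda>z. sqrt (dens lam (Pe e) z) - a z - e *\<^sub>R u z) = r e"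
      by (auto simp: fun_eq_iff r_def a_def u_def p_def)
    ultimately show ?thesis by simp
  qed
  have rho_sq: "\<forall>\<^sub>F e in at (0::real). (\<integral>\<^sup>+ z. ennreal ((sqrt (dens lam (Pe e) z) - sqrt (dens lam P z)
                 - e * s z * sqrt (dens lam P z) / 2)\<^sup>2) \<partial>lam) / ennreal (e\<^sup>2) = ennreal ((\<rho> e)\<^sup>2)"
    using evr
  proof eventually_elim
    case (elim e)
    then have L: "r e \<in> L2H lam" and e0: "e \<noteq> 0" using rL by auto
    have "(\<integral>\<^sup>+ z. ennreal ((r e z)\<^sup>2) \<partial>lam) = ennreal (\<integral>z. (r e z)\<^sup>2 \<partial>lam)"
      using L by (intro nn_integral_eq_integral) (auto simp: L2H_def)
    also have "(\<integral>z. (r e z)\<^sup>2 \<partial>lam) = (L2Hnorm lam (r e))\<^sup>2"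
      by (simp add: L2Hnorm_def)
    finally have "(\<integral>\<^sup>+ z. ennreal ((r e z)\<^sup>2) \<partial>lam) / ennreal (e\<^sup>2) = ennreal ((L2Hnorm lam (r e))\<^sup>2) / ennreal (e\<^sup>2)"
      by simp
    also have "\<dots> = ennreal ((L2Hnorm lam (r e))\<^sup>2 / e\<^sup>2)"
      using e0 by (intro divide_ennreal) auto
    also have "(L2Hnorm lam (r e))\<^sup>2 / e\<^sup>2 = (\<rho> e)\<^sup>2"
      by (simp add: \<rho>_def power_divide)
    finally show ?case by (simp add: r_def)
  qed
  have "((\<lambda>e. ennreal ((\<rho> e)\<^sup>2)) \<longlongrightarrow> 0) (at (0::real))"
    using tendsto_cong[OF rho_sq] dqm by simp
  then have "((\<lambda>e. (\<rho> e)\<^sup>2) \<longlongrightarrow> 0) (at (0::real))"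
    using tendsto_ennreal_iff[of "\<lambda>e. (\<rho> e)\<^sup>2" "at (0::real)" 0] by simp
  then have "((\<lambda>e. sqrt ((\<rho> e)\<^sup>2)) \<longlongrightarrow> sqrt 0) (at (0::real))"
    by (rule tendsto_real_sqrt)
  moreover have "sqrt ((\<rho> e)\<^sup>2) = \<rho> e" for e
    by (simp add: \<rho>_def L2Hnorm_nonneg)
  ultimately have rho0: "(\<rho> \<longlongrightarrow> 0) (at (0::real))" by simp
  define F where "F e = \<rho> e + \<bar>e\<bar> * (L2Hnorm lam u + \<rho> e)\<^sup>2 / 2" for e
  have F0: "(F \<longlongrightarrow> 0) (at (0::real))"
  proof -
    have "((\<lambda>e. \<rho> e + \<bar>e\<bar> * (L2Hnorm lam u + \<rho> e)\<^sup>2 / 2) \<longlongrightarrow> 0 + \<bar>0\<bar> * (L2Hnorm lam u + 0)\<^sup>2 / 2) (at (0::real))"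
      by (intro tendsto_intros rho0) simp_all
    then show ?thesis by (simp add: F_def[abs_def])
  qed
  have bound: "\<forall>\<^sub>F e in at (0::real). \<bar>Ip lam a u\<bar> \<le> F e"
    using evr
  proof eventually_elim
    case (elim e)
    then have e0: "e \<noteq> 0" and PeM: "Pe e \<in> M" by auto
    have L: "r e \<in> L2H lam" using rL PeM by auto
    define w where "w z = e *\<^sub>R u z + r e z" for z
    have wL: "w \<in> L2H lam" unfolding w_def[abs_def] by (intro L2H_add L2H_scale uL L)
    have bw: "(\<lambda>z. sqrt (dens lam (Pe e) z)) = (\<lambda>z. a z + w z)"
      by (auto simp: fun_eq_iff w_def r_def a_def u_def p_def)
    have "1 = Ip lam (\<lambda>z. a z + w z) (\<lambda>z. a z + w z)"
      using sqrt_dens_L2H(2)[OF ms PeM] bw by simp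
    also have "\<dots> = Ip lam a a + 2 * Ip lam a w + Ip lam w w"
      by (rule Ip_expand_add[OF aL wL])
    also have "Ip lam a w = e * Ip lam a u + Ip lam a (r e)"
      unfolding w_def[abs_def] using Ip_add_right[OF L2H_scale[OF uL, of e] L aL]
      using Ip_scale_right[where M=lam and c=e and f=u and k=a] by simp
    finally have id: "0 = 2 * e * Ip lam a u + 2 * Ip lam a (r e) + Ip lam w w"
      using aa by simp
    have n1: "\<bar>Ip lam a (r e)\<bar> \<le> L2Hnorm lam (r e)"
      using Ip_CS[OF aL L] aa by (simp add: L2Hnorm_Ip)
    have "L2Hnorm lam w \<le> L2Hnorm lam (\<lambda>z. e *\<^sub>R u z) + L2Hnorm lam (r e)"
      unfolding w_def by (rule L2Hnorm_triangle[OF L2H_scale[OF uL] L])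
    also have "L2Hnorm lam (\<lambda>z. e *\<^sub>R u z) = \<bar>e\<bar> * L2Hnorm lam u" by (rule L2Hnorm_scale)
    finally have nw: "L2Hnorm lam w \<le> \<bar>e\<bar> * L2Hnorm lam u + L2Hnorm lam (r e)" .
    have ww: "Ip lam w w \<le> (\<bar>e\<bar> * L2Hnorm lam u + L2Hnorm lam (r e))\<^sup>2"
      using power_mono[OF nw L2Hnorm_nonneg, of 2] by (simp add: L2Hnorm_sq)
    have ww0: "Ip lam w w \<ge> 0" by (rule Ip_nonneg)
    have "2 * e * Ip lam a u = - (2 * Ip lam a (r e) + Ip lam w w)" using id by linarith
    then have "\<bar>2 * e * Ip lam a u\<bar> = \<bar>2 * Ip lam a (r e) + Ip lam w w\<bar>" by simp
    then have "2 * \<bar>e\<bar> * \<bar>Ip lam a u\<bar> = \<bar>2 * Ip lam a (r e) + Ip lam w w\<bar>"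
      by (simp add: abs_mult)
    also have "\<dots> \<le> 2 * L2Hnorm lam (r e) + (\<bar>e\<bar> * L2Hnorm lam u + L2Hnorm lam (r e))\<^sup>2"
      using n1 ww ww0 by linarith
    finally have ineq: "2 * \<bar>e\<bar> * \<bar>Ip lam a u\<bar> \<le> 2 * L2Hnorm lam (r e) + (\<bar>e\<bar> * L2Hnorm lam u + L2Hnorm lam (r e))\<^sup>2" .
    have ep: "\<bar>e\<bar> > 0" using e0 by simp
    have rr: "L2Hnorm lam (r e) = \<bar>e\<bar> * \<rho> e" using ep by (simp add: \<rho>_def)
    have "(\<bar>e\<bar> * L2Hnorm lam u + L2Hnorm lam (r e))\<^sup>2 = \<bar>e\<bar> * (\<bar>e\<bar> * (L2Hnorm lam u + \<rho> e)\<^sup>2)"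
      by (simp add: rr power2_eq_square algebra_simps)
    then have "2 * \<bar>e\<bar> * \<bar>Ip lam a u\<bar> \<le> 2 * \<bar>e\<bar> * F e"
      using ineq by (simp add: rr F_def algebra_simps)
    then show ?case using ep by simp
  qed
  have "\<bar>Ip lam a u\<bar> \<le> 0"
    by (rule tendsto_lowerbound[OF F0 bound]) simp
  then show ?thesis using au by simp
qed




lemma L2_eq_L2H: "L2 P = L2H P"
  by (simp add: L2_def L2H_def)

lemma L2norm_eq: "L2norm P f = L2Hnorm P f"
  by (simp add: L2norm_def L2Hnorm_def)

definition BT :: "'z::polish_space measure \<Rightarrow> 'z measure set \<Rightarrow> 'z measure \<Rightarrow> ('z \<Rightarrow> real) set" where
  "BT lam M P = {g. \<exists>c s. s \<in> scores lam M P \<and> g = (\<lambda>z. c * s z)}"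

lemma BT_L2H: "BT lam M P \<subseteq> L2H P"
proof
  fix g assume "g \<in> BT lam M P"
  then obtain c s where s: "s \<in> scores lam M P" and g: "g = (\<lambda>z. c * s z)" by (auto simp: BT_def)
  have "s \<in> L2H P" using s by (auto simp: scores_def submodel_def L2_eq_L2H)
  then show "g \<in> L2H P" using L2H_scale[of s P c] g by simp
qed

lemma BT_scale: "a \<in> BT lam M P \<Longrightarrow> (\<lambda>z. c *\<^sub>R a z) \<in> BT lam M P"
  by (auto simp: BT_def) (metis mult.assoc)

lemma tangent_SA: "tangent_space lam M P = SA P (BT lam M P)"
proof (intro set_eqI iffI)
  fix f assume f: "f \<in> tangent_space lam M P"
  show "f \<in> SA P (BT lam M P)"
    unfolding SA_def
  proof (intro CollectI conjI allI impI)
    show "f \<in> L2H P" using f by (simp add: tangent_space_def L2_eq_L2H)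
    fix \<epsilon> :: real assume "\<epsilon> > 0"
    then obtain n :: nat and c s where cs: "\<forall>i<n. s i \<in> scores lam M P"
      "L2norm P (\<lambda>z. f z - (\<Sum>i<n. c i * s i z)) < \<epsilon>"
      using f unfolding tangent_space_def by blast
    show "\<exists>(n::nat) a. (\<forall>i<n. a i \<in> BT lam M P) \<and> L2Hnorm P (\<lambda>z. f z - (\<Sum>i<n. a i z)) < \<epsilon>"
      using cs by (intro exI[of _ n] exI[of _ "\<lambda>i z. c i * s i z"]) (auto simp: BT_def L2norm_eq)
  qed
next
  fix f assume f: "f \<in> SA P (BT lam M P)"
  show "f \<in> tangent_space lam M P"
    unfolding tangent_space_def
  proof (intro CollectI conjI allI impI)
    show "f \<in> L2 P" using f by (simp add: SA_def L2_eq_L2H)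
    fix \<epsilon> :: real assume "\<epsilon> > 0"
    then obtain n :: nat and a where a: "\<forall>i<n. a i \<in> BT lam M P"
      "L2Hnorm P (\<lambda>z. f z - (\<Sum>i<n. a i z)) < \<epsilon>"
      using f unfolding SA_def by blast
    have "\<forall>i. \<exists>cs. i < n \<longrightarrow> (snd cs \<in> scores lam M P \<and> a i = (\<lambda>z. fst cs * snd cs z))"
      using a(1) by (auto simp: BT_def)
    from choice[OF this] obtain CS where CS: "\<And>i. i < n \<Longrightarrow> snd (CS i) \<in> scores lam M P \<and> a i = (\<lambda>z. fst (CS i) * snd (CS i) z)"
      by blast
    have "(\<Sum>i<n. a i z) = (\<Sum>i<n. fst (CS i) * snd (CS i) z)" for z
      by (rule sum.cong) (auto simp: CS)
    then show "\<exists>(n::nat) c s. (\<forall>i<n. s i \<in> scores lam M P) \<and> L2norm P (\<lambda>z. f z - (\<Sum>i<n. c i * s i z)) < \<epsilon>"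
      using a(2) CS by (intro exI[of _ n] exI[of _ "\<lambda>i. fst (CS i)"] exI[of _ "\<lambda>i. snd (CS i)"]) (auto simp: L2norm_eq)
  qed
qed

definition BPhi :: "'z::polish_space measure \<Rightarrow> 'z measure set \<Rightarrow> 'z measure \<Rightarrow> ('z \<Rightarrow> 'h::real_normed_vector) set" where
  "BPhi lam M P = {g. \<exists>s h. s \<in> tangent_space lam M P \<and> g = (\<lambda>z. s z *\<^sub>R h)}"

lemma tangent_L2H: "s \<in> tangent_space lam M P \<Longrightarrow> s \<in> L2H P"
  by (simp add: tangent_space_def L2_eq_L2H)

lemma L2H_times_vec:
  fixes h :: "'h::{real_inner, second_countable_topology}"
  assumes "s \<in> L2H P"
  shows "(\<lambda>z. s z *\<^sub>R h) \<in> L2H P"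
proof -
  have [measurable]: "s \<in> borel_measurable P" and i: "integrable P (\<lambda>z. (s z)\<^sup>2)"
    using assms by (auto simp: L2H_def)
  have "integrable P (\<lambda>z. (norm h)\<^sup>2 * (s z)\<^sup>2)" using i by simp
  moreover have "(\<lambda>z. (norm h)\<^sup>2 * (s z)\<^sup>2) = (\<lambda>z. (norm (s z *\<^sub>R h))\<^sup>2)"
    by (auto simp: power_mult_distrib)
  ultimately show ?thesis unfolding L2H_def by auto
qed

lemma BPhi_L2H: "BPhi lam M P \<subseteq> (L2H P :: ('z::polish_space \<Rightarrow> 'h::{real_inner, second_countable_topology}) set)"
  by (auto simp: BPhi_def intro!: L2H_times_vec tangent_L2H)

lemma BPhi_scale:
  fixes a :: "'z::polish_space \<Rightarrow> 'h::{real_inner, second_countable_topology}"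
  assumes "a \<in> BPhi lam M P"
  shows "(\<lambda>z. c *\<^sub>R a z) \<in> BPhi lam M P"
proof -
  obtain s h where s: "s \<in> tangent_space lam M P" and a: "a = (\<lambda>z. s z *\<^sub>R h)"
    using assms by (auto simp: BPhi_def)
  have "(\<lambda>z. c *\<^sub>R s z) \<in> tangent_space lam M P"
    unfolding tangent_SA by (rule SA_scale[OF BT_L2H BT_scale]) (use s tangent_SA in auto)
  moreover have "(\<lambda>z. c *\<^sub>R a z) = (\<lambda>z. (c *\<^sub>R s z) *\<^sub>R h)" by (simp add: a)
  ultimately show ?thesis unfolding BPhi_def by blast
qed

lemma Phi_SA: "Phi lam M P = (SA P (BPhi lam M P) :: ('z::polish_space \<Rightarrow> 'h::{real_inner, second_countable_topology}) set)"
proof (intro set_eqI iffI)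
  fix f :: "'z \<Rightarrow> 'h" assume f: "f \<in> Phi lam M P"
  show "f \<in> SA P (BPhi lam M P)"
    unfolding SA_def
  proof (intro CollectI conjI allI impI)
    show "f \<in> L2H P" using f by (simp add: Phi_def)
    fix \<epsilon> :: real assume "\<epsilon> > 0"
    then obtain n :: nat and s h where cs: "\<forall>i<n. s i \<in> tangent_space lam M P"
      "L2Hnorm P (\<lambda>z. f z - (\<Sum>i<n. s i z *\<^sub>R h i)) < \<epsilon>"
      using f unfolding Phi_def by blast
    show "\<exists>(n::nat) a. (\<forall>i<n. a i \<in> BPhi lam M P) \<and> L2Hnorm P (\<lambda>z. f z - (\<Sum>i<n. a i z)) < \<epsilon>"
      using cs by (intro exI[of _ n] exI[of _ "\<lambda>i z. s i z *\<^sub>R h i"]) (auto simp: BPhi_def)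
  qed
next
  fix f :: "'z \<Rightarrow> 'h" assume f: "f \<in> SA P (BPhi lam M P)"
  show "f \<in> Phi lam M P"
    unfolding Phi_def
  proof (intro CollectI conjI allI impI)
    show "f \<in> L2H P" using f by (simp add: SA_def)
    fix \<epsilon> :: real assume "\<epsilon> > 0"
    then obtain n :: nat and a where a: "\<forall>i<n. a i \<in> BPhi lam M P"
      "L2Hnorm P (\<lambda>z. f z - (\<Sum>i<n. a i z)) < \<epsilon>"
      using f unfolding SA_def by blast
    have "\<forall>i. \<exists>sh. i < n \<longrightarrow> (fst sh \<in> tangent_space lam M P \<and> a i = (\<lambda>z. fst sh z *\<^sub>R snd sh))"
      using a(1) by (auto simp: BPhi_def)
    from choice[OF this] obtain SH where SH: "\<And>i. i < n \<Longrightarrow> fst (SH i) \<in> tangent_space lam M P \<and> a i = (\<lambda>z. fst (SH i) z *\<^sub>R snd (SH i))"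
      by blast
    have "(\<Sum>i<n. a i z) = (\<Sum>i<n. fst (SH i) z *\<^sub>R snd (SH i))" for z
      by (rule sum.cong) (auto simp: SH)
    then show "\<exists>(n::nat) s h. (\<forall>i<n. s i \<in> tangent_space lam M P) \<and> L2Hnorm P (\<lambda>z. f z - (\<Sum>i<n. s i z *\<^sub>R h i)) < \<epsilon>"
      using a(2) SH by (intro exI[of _ n] exI[of _ "\<lambda>i. fst (SH i)"] exI[of _ "\<lambda>i. snd (SH i)"]) auto
  qed
qed




lemma tangent_L2_0:
  assumes ms: "model_setting lam M" and PM: "P \<in> M" and f: "f \<in> tangent_space lam M P"
  shows "f \<in> L2_0 P"
proof -
  have Pprob: "prob_space P" using ms PM by (auto simp: model_setting_def)
  have fS: "f \<in> SA P (BT lam M P)" using f tangent_SA by blast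
  have fL: "f \<in> L2H P" using f by (rule tangent_L2H)
  have "\<bar>\<integral>z. f z \<partial>P\<bar> \<le> 0 + \<epsilon>" if "\<epsilon> > 0" for \<epsilon>
  proof -
    obtain n :: nat and a where a: "\<forall>i<n. a i \<in> BT lam M P" "L2Hnorm P (\<lambda>z. f z - (\<Sum>i<n. a i z)) < \<epsilon>"
      using SA_approx[OF BT_L2H BT_scale fS \<open>\<epsilon> > 0\<close>] by blast
    have aL: "a i \<in> L2H P" if "i < n" for i using a(1) that BT_L2H by blast
    have ai: "integrable P (a i)" if "i < n" for i by (rule L2H_integrable_real(1)[OF Pprob aL[OF that]])
    have a0: "(\<integral>z. a i z \<partial>P) = 0" if "i < n" for i
    proof -
      obtain c s where s: "s \<in> scores lam M P" and ai: "a i = (\<lambda>z. c * s z)"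
        using a(1) \<open>i < n\<close> by (auto simp: BT_def)
      obtain Pe where "submodel lam M P Pe s" using s by (auto simp: scores_def)
      then have "(\<integral>z. s z \<partial>P) = 0" by (rule score_mean_zero[OF ms PM])
      then show ?thesis by (simp add: ai)
    qed
    have SL: "(\<lambda>z. \<Sum>i<n. a i z) \<in> L2H P" by (rule L2H_sum) (use aL in auto)
    have dL: "(\<lambda>z. f z - (\<Sum>i<n. a i z)) \<in> L2H P" by (rule L2H_diff[OF fL SL])
    have "(\<integral>z. (\<Sum>i<n. a i z) \<partial>P) = (\<Sum>i<n. \<integral>z. a i z \<partial>P)"
      by (rule Bochner_Integration.integral_sum) (use ai in auto)
    also have "\<dots> = 0" using a0 by simp
    finally have S0: "(\<integral>z. (\<Sum>i<n. a i z) \<partial>P) = 0" .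
    have "(\<integral>z. f z \<partial>P) = (\<integral>z. f z - (\<Sum>i<n. a i z) \<partial>P) + (\<integral>z. (\<Sum>i<n. a i z) \<partial>P)"
      using L2H_integrable_real(1)[OF Pprob dL] L2H_integrable_real(1)[OF Pprob SL]
      by (subst Bochner_Integration.integral_add[symmetric]) auto
    then have "(\<integral>z. f z \<partial>P) = (\<integral>z. f z - (\<Sum>i<n. a i z) \<partial>P)" using S0 by simp
    then have "\<bar>\<integral>z. f z \<partial>P\<bar> \<le> L2Hnorm P (\<lambda>z. f z - (\<Sum>i<n. a i z))"
      using L2H_integrable_real(2)[OF Pprob dL] by simp
    then show ?thesis using a(2) by simp
  qed
  then have "\<bar>\<integral>z. f z \<partial>P\<bar> \<le> 0" by (rule field_le_epsilon)
  then show ?thesis using fL by (simp add: L2_0_def L2_eq_L2H)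
qed

lemma inner_fun_L2H:
  fixes phi :: "'z \<Rightarrow> 'h::{real_inner, second_countable_topology}"
  assumes "phi \<in> L2H P"
  shows "(\<lambda>z. inner h (phi z)) \<in> L2H P"
    and "L2Hnorm P (\<lambda>z. inner h (phi z)) \<le> norm h * L2Hnorm P phi"
proof -
  have [measurable]: "phi \<in> borel_measurable P" and i: "integrable P (\<lambda>z. (norm (phi z))\<^sup>2)"
    using assms by (auto simp: L2H_def)
  have pw: "(inner h (phi z))\<^sup>2 \<le> (norm h)\<^sup>2 * (norm (phi z))\<^sup>2" for z
  proof -
    have "\<bar>inner h (phi z)\<bar> \<le> norm h * norm (phi z)" by (rule Cauchy_Schwarz_ineq2)
    then have "\<bar>inner h (phi z)\<bar>\<^sup>2 \<le> (norm h * norm (phi z))\<^sup>2" by (rule power_mono) simp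
    then show ?thesis by (simp add: power_mult_distrib)
  qed
  have i2: "integrable P (\<lambda>z. (norm h)\<^sup>2 * (norm (phi z))\<^sup>2)" using i by simp
  have ii: "integrable P (\<lambda>z. (inner h (phi z))\<^sup>2)"
  proof (rule Bochner_Integration.integrable_bound[OF i2])
    show "(\<lambda>z. (inner h (phi z))\<^sup>2) \<in> borel_measurable P" by measurable
    show "AE z in P. norm ((inner h (phi z))\<^sup>2) \<le> norm ((norm h)\<^sup>2 * (norm (phi z))\<^sup>2)"
      using pw by simp
  qed
  then show "(\<lambda>z. inner h (phi z)) \<in> L2H P" by (simp add: L2H_def)
  have "(\<integral>z. (inner h (phi z))\<^sup>2 \<partial>P) \<le> (\<integral>z. (norm h)\<^sup>2 * (norm (phi z))\<^sup>2 \<partial>P)"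
    by (rule integral_mono[OF ii i2 pw])
  also have "\<dots> = (norm h)\<^sup>2 * (\<integral>z. (norm (phi z))\<^sup>2 \<partial>P)" by simp
  finally have "sqrt (\<integral>z. (inner h (phi z))\<^sup>2 \<partial>P) \<le> sqrt ((norm h)\<^sup>2 * (\<integral>z. (norm (phi z))\<^sup>2 \<partial>P))"
    by (rule real_sqrt_le_mono)
  then show "L2Hnorm P (\<lambda>z. inner h (phi z)) \<le> norm h * L2Hnorm P phi"
    by (simp add: L2Hnorm_def real_sqrt_mult)
qed

lemma inner_in_tangent:
  fixes phi :: "'z::polish_space \<Rightarrow> 'h::{real_inner, second_countable_topology}"
  assumes phi: "phi \<in> Phi lam M P"
  shows "(\<lambda>z. inner h (phi z)) \<in> tangent_space lam M P"
proof -
  have phiS: "phi \<in> SA P (BPhi lam M P)" using phi Phi_SA by blast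
  have phiL: "phi \<in> L2H P" using phi by (simp add: Phi_def)
  note TS = tangent_SA[of lam M P]
  show ?thesis
    unfolding TS
  proof (rule SA_closed[OF BT_L2H BT_scale inner_fun_L2H(1)[OF phiL]])
    fix \<epsilon> :: real assume "\<epsilon> > 0"
    moreover have "norm h + 1 > 0" using norm_ge_zero[of h] by linarith
    ultimately have "\<epsilon> / (norm h + 1) > 0" by simp
    then obtain n :: nat and a where a: "\<forall>i<n. a i \<in> BPhi lam M P"
      "L2Hnorm P (\<lambda>z. phi z - (\<Sum>i<n. a i z)) < \<epsilon> / (norm h + 1)"
      using SA_approx[OF BPhi_L2H BPhi_scale phiS] by blast
    have "\<forall>i. \<exists>sh. i < n \<longrightarrow> (fst sh \<in> tangent_space lam M P \<and> a i = (\<lambda>z. fst sh z *\<^sub>R snd sh))"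
      using a(1) by (auto simp: BPhi_def)
    from choice[OF this] obtain SH where SH: "\<And>i. i < n \<Longrightarrow> fst (SH i) \<in> tangent_space lam M P \<and> a i = (\<lambda>z. fst (SH i) z *\<^sub>R snd (SH i))"
      by blast
    define g where "g z = (\<Sum>i<n. inner h (snd (SH i)) *\<^sub>R fst (SH i) z)" for z
    have each: "(\<lambda>z. inner h (snd (SH i)) *\<^sub>R fst (SH i) z) \<in> SA P (BT lam M P)" if "i \<in> {..<n}" for i
    proof -
      have "fst (SH i) \<in> SA P (BT lam M P)" using SH[of i] that TS by auto
      note X = SA_scale[OF BT_L2H BT_scale this]
      show ?thesis by (rule X)
    qed
    have gS0: "(\<lambda>z. \<Sum>i\<in>{..<n}. (\<lambda>i z. inner h (snd (SH i)) *\<^sub>R fst (SH i) z) i z) \<in> SA P (BT lam M P)"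
      apply (rule SA_sum[OF BT_L2H])
      subgoal for a c using BT_scale[of a lam M P c] by simp
      subgoal for i using each[of i] by simp
      done
    have gS: "g \<in> SA P (BT lam M P)"
      using gS0 unfolding g_def[abs_def] by simp
    have aL: "(\<lambda>z. \<Sum>i<n. a i z) \<in> L2H P"
      by (rule L2H_sum) (use a(1) BPhi_L2H in blast)
    have eq: "(\<lambda>z. inner h (phi z) - g z) = (\<lambda>z. inner h (phi z - (\<Sum>i<n. a i z)))"
    proof
      fix z
      have "inner h (\<Sum>i<n. a i z) = (\<Sum>i<n. inner h (a i z))" by (rule inner_sum_right)
      also have "\<dots> = g z" unfolding g_def by (rule sum.cong) (auto simp: SH)
      finally show "inner h (phi z) - g z = inner h (phi z - (\<Sum>i<n. a i z))"
        by (simp add: inner_diff_right)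
    qed
    have "L2Hnorm P (\<lambda>z. inner h (phi z) - g z) \<le> norm h * L2Hnorm P (\<lambda>z. phi z - (\<Sum>i<n. a i z))"
      unfolding eq by (rule inner_fun_L2H(2)[OF L2H_diff[OF phiL aL]])
    also have "\<dots> \<le> norm h * (\<epsilon> / (norm h + 1))"
      using a(2) by (intro mult_left_mono) auto
    also have "\<dots> < \<epsilon>"
    proof -
      have "norm h + 1 > 0" using norm_ge_zero[of h] by linarith
      then have "norm h / (norm h + 1) < 1" by (simp add: divide_less_eq)
      then have "\<epsilon> * (norm h / (norm h + 1)) < \<epsilon> * 1" using \<open>\<epsilon> > 0\<close> by (intro mult_strict_left_mono)
      then show ?thesis by (simp add: mult.commute)
    qed
    finally show "\<exists>g\<in>SA P (BT lam M P). L2Hnorm P (\<lambda>z. inner h (phi z) - g z) < \<epsilon>"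
      using gS by blast
  qed
qed




theorem lemmaS15:
  fixes lam :: "'z::polish_space measure"
    and M :: "'z measure set"
    and nu :: "'z measure \<Rightarrow> 'h::{real_inner, polish_space}"
    and P :: "'z measure"
    and D :: "('z \<Rightarrow> real) \<Rightarrow> 'h"
    and phi_ext :: "'z \<Rightarrow> 'h"
  assumes "model_setting lam M"
    and "P \<in> M"
    and "pathwise_derivative lam M nu P D"
    and "influence_function lam M P D phi_ext"
    and "phi_ext \<in> L2H P"
  shows "(\<exists>phi. is_orth_proj P (Phi lam M P) phi_ext phi) \<and>
         (\<forall>phi. is_orth_proj P (Phi lam M P) phi_ext phi \<longrightarrow>
              phi \<in> L2H P \<and> efficient_influence_function lam M P D phi)"
proof -
  have Pprob: "prob_space P" using assms(1,2) by (auto simp: model_setting_def)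
  have feL: "phi_ext \<in> L2H P" by (rule assms(5))
  have [measurable]: "phi_ext \<in> borel_measurable P" using feL by (simp add: L2H_def)
  have PhiS: "(Phi lam M P :: ('z \<Rightarrow> 'h) set) = SA P (BPhi lam M P)" by (rule Phi_SA)
  have ex: "\<exists>phi. is_orth_proj P (Phi lam M P) phi_ext phi"
  proof -
    obtain g where "g \<in> SA P (BPhi lam M P)" "\<forall>k\<in>SA P (BPhi lam M P). Ip P (\<lambda>z. phi_ext z - g z) k = 0"
      using proj_exists[OF Pprob BPhi_L2H BPhi_scale feL] by blast
    then show ?thesis unfolding is_orth_proj_def PhiS Ip_def by blast
  qed
  have main: "phi \<in> L2H P \<and> efficient_influence_function lam M P D phi"
    if op: "is_orth_proj P (Phi lam M P) phi_ext phi" for phi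
  proof -
    have phiPhi: "phi \<in> Phi lam M P"
      and orth: "\<forall>k\<in>Phi lam M P. (\<integral>z. inner (phi_ext z - phi z) (k z) \<partial>P) = 0"
      using op by (auto simp: is_orth_proj_def)
    have phiL: "phi \<in> L2H P" using phiPhi by (simp add: Phi_def)
    obtain Dext Aext where Dext: "\<forall>f\<in>tangent_space lam M P. Dext f = D f"
      and adj: "is_adjoint P (L2_0 P) Dext Aext" and AEx: "\<forall>h. AE z in P. Aext h z = inner h (phi_ext z)"
      using assms(4) by (auto simp: influence_function_def)
    define A where "A h z = inner h (phi z)" for h z
    have isadj: "is_adjoint P (tangent_space lam M P) D A"
      unfolding is_adjoint_def
    proof (intro allI conjI ballI)
      fix h
      show "A h \<in> tangent_space lam M P" unfolding A_def[abs_def] by (rule inner_in_tangent[OF phiPhi])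
      fix f assume fT: "f \<in> tangent_space lam M P"
      have f0: "f \<in> L2_0 P" by (rule tangent_L2_0[OF assms(1,2) fT])
      have fL: "f \<in> L2H P" using fT by (rule tangent_L2H)
      have [measurable]: "f \<in> borel_measurable P" using fL by (simp add: L2H_def)
      have kPhi: "(\<lambda>z. f z *\<^sub>R h) \<in> Phi lam M P" unfolding PhiS
        by (rule SA_base[OF BPhi_L2H BPhi_scale]) (use fT in \<open>auto simp: BPhi_def\<close>)
      have kL: "(\<lambda>z. f z *\<^sub>R h) \<in> L2H P" by (rule L2H_times_vec[OF fL])
      have Ah: "Aext h \<in> L2_0 P" and adjf: "inner (Dext f) h = (\<integral>z. f z * Aext h z \<partial>P)"
        using adj f0 by (auto simp: is_adjoint_def)
      have [measurable]: "Aext h \<in> borel_measurable P" using Ah by (simp add: L2_0_def L2_def)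
      have "inner (D f) h = inner (Dext f) h" using Dext fT by simp
      also have "\<dots> = (\<integral>z. f z * Aext h z \<partial>P)" by (rule adjf)
      also have "\<dots> = (\<integral>z. f z * inner h (phi_ext z) \<partial>P)"
      proof (rule integral_cong_AE)
        show "AE z in P. f z * Aext h z = f z * inner h (phi_ext z)"
          using AEx[rule_format, of h] by eventually_elim simp
      qed measurable
      also have "\<dots> = (\<integral>z. f z * inner h (phi z) \<partial>P)"
      proof -
        have i1: "integrable P (\<lambda>z. inner (f z *\<^sub>R h) (phi_ext z))" by (rule L2H_inner_integrable[OF kL feL])
        have i2: "integrable P (\<lambda>z. inner (f z *\<^sub>R h) (phi z))" by (rule L2H_inner_integrable[OF kL phiL])
        have z: "(\<integral>z. inner (phi_ext z - phi z) (f z *\<^sub>R h) \<partial>P) = 0" using orth[rule_format, OF kPhi] by simp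
        have "(\<integral>z. inner (phi_ext z - phi z) (f z *\<^sub>R h) \<partial>P)
            = (\<integral>z. inner (f z *\<^sub>R h) (phi_ext z) - inner (f z *\<^sub>R h) (phi z) \<partial>P)"
          by (simp add: inner_diff_left inner_diff_right inner_commute right_diff_distrib)
        also have "\<dots> = (\<integral>z. inner (f z *\<^sub>R h) (phi_ext z) \<partial>P) - (\<integral>z. inner (f z *\<^sub>R h) (phi z) \<partial>P)"
          by (rule Bochner_Integration.integral_diff[OF i1 i2])
        finally show ?thesis using z by simp
      qed
      finally show "inner (D f) h = (\<integral>z. f z * A h z \<partial>P)" by (simp add: A_def)
    qed
    obtain Dd :: "'h set" where cD: "countable Dd" and Dd: "\<And>X. open X \<Longrightarrow> X \<noteq> {} \<Longrightarrow> \<exists>d\<in>Dd. d \<in> X"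
      by (erule countable_dense_setE)
    have clD: "closure Dd = UNIV"
    proof (intro set_eqI iffI)
      fix x :: 'h
      show "x \<in> closure Dd"
        unfolding closure_approachable
      proof (intro allI impI)
        fix e :: real assume "e > 0"
        then obtain d where "d \<in> Dd" "d \<in> ball x e" using Dd[of "ball x e"] by auto
        then show "\<exists>y\<in>Dd. dist y x < e" by (auto simp: dist_commute)
      qed
    qed simp
    have sep: "AE z in P. \<forall>h. \<exists>hj. (\<forall>j. hj j \<in> Dd) \<and> hj \<longlonglongrightarrow> h \<and> (\<lambda>j. A (hj j) z) \<longlonglongrightarrow> A h z"
    proof (rule AE_I2, intro allI)
      fix z h
      have "h \<in> closure Dd" using clD by simp
      then obtain hj where hj: "\<forall>j. hj j \<in> Dd" "hj \<longlonglongrightarrow> h" unfolding closure_sequential by blast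
      have "(\<lambda>j. inner (hj j) (phi z)) \<longlonglongrightarrow> inner h (phi z)"
        by (intro tendsto_intros hj(2))
      then show "\<exists>hj. (\<forall>j. hj j \<in> Dd) \<and> hj \<longlonglongrightarrow> h \<and> (\<lambda>j. A (hj j) z) \<longlonglongrightarrow> A h z"
        using hj by (auto simp: A_def)
    qed
    have "efficient_influence_operator lam M P D A"
      unfolding efficient_influence_operator_def using isadj cD clD sep by blast
    moreover have "AE z in P. \<forall>h. A h z = inner h (phi z)" by (simp add: A_def)
    ultimately have "efficient_influence_function lam M P D phi"
      unfolding efficient_influence_function_def by blast
    then show ?thesis using phiL by simp
  qed
  show ?thesis using ex main by blast
qed


end
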